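(* Let $G$ be a finite group and let $M,N$ be normal subgroups of $G$ with $1\neq M<N$. The following are equivalent: (1) every $g\in G\setminus N$ is conjugate in $G$ to every element of $gM$; (2) $|C_G(g)|=|C_{G/M}(Mg)|$ for every $g\in G\setminus N$; (3) for every $g\in G\setminus N$ we have $\chi(g)=0$ for all $\chi\in\mathrm{Irr}(G\mid M)$; (4) $V(G\mid M)\le N$; (5) for all $g\in G\setminus N$ and all $z\in M$ there exists $y\in G$ with $[g,y]=z$.
   Context: $\mathrm{Irr}(G)$ denotes the set of complex irreducible characters of $G$, and $\mathrm{Irr}(G\mid M)=\{\chi\in\mathrm{Irr}(G)\mid M\not\le\ker\chi\}$. The vanishing-off subgroup $V(G\mid M)$ is the subgroup of $G$ generated by all elements $g\in G$ such that $\chi(g)\neq 0$ for some $\chi\in\mathrm{Irr}(G\mid M)$. The commutator is $[g,y]=g^{-1}y^{-1}gy$. *)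

theory Defs
  imports "HOL-Algebra.Algebra" "Jordan_Normal_Form.Matrix"
begin

definition centralizer_of :: "('a, 'b) monoid_scheme \<Rightarrow> 'a \<Rightarrow> 'a set" where
  "centralizer_of G g = {x \<in> carrier G. x \<otimes>\<^bsub>G\<^esub> g = g \<otimes>\<^bsub>G\<^esub> x}"

definition is_rep :: "('a, 'b) monoid_scheme \<Rightarrow> nat \<Rightarrow> ('a \<Rightarrow> complex mat) \<Rightarrow> bool" where
  "is_rep G n \<rho> \<longleftrightarrow>
     (\<forall>g \<in> carrier G. \<rho> g \<in> carrier_mat n n) \<and>
     (\<forall>g \<in> carrier G. \<forall>h \<in> carrier G. \<rho> (g \<otimes>\<^bsub>G\<^esub> h) = \<rho> g * \<rho> h) \<and>
     \<rho> \<one>\<^bsub>G\<^esub> = 1\<^sub>m n"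

definition invariant_subspace :: "('a, 'b) monoid_scheme \<Rightarrow> nat \<Rightarrow> ('a \<Rightarrow> complex mat) \<Rightarrow> complex vec set \<Rightarrow> bool" where
  "invariant_subspace G n \<rho> W \<longleftrightarrow>
     W \<subseteq> carrier_vec n \<and> 0\<^sub>v n \<in> W \<and>
     (\<forall>v \<in> W. \<forall>w \<in> W. v + w \<in> W) \<and>
     (\<forall>c::complex. \<forall>v \<in> W. c \<cdot>\<^sub>v v \<in> W) \<and>
     (\<forall>g \<in> carrier G. \<forall>v \<in> W. \<rho> g *\<^sub>v v \<in> W)"

definition irreducible_rep :: "('a, 'b) monoid_scheme \<Rightarrow> nat \<Rightarrow> ('a \<Rightarrow> complex mat) \<Rightarrow> bool" where
  "irreducible_rep G n \<rho> \<longleftrightarrow> is_rep G n \<rho> \<and> n > 0 \<and>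
     (\<forall>W. invariant_subspace G n \<rho> W \<longrightarrow> W = {0\<^sub>v n} \<or> W = carrier_vec n)"

definition mat_trace :: "complex mat \<Rightarrow> complex" where
  "mat_trace A = (\<Sum>i<dim_row A. A $$ (i, i))"

definition Irr :: "('a, 'b) monoid_scheme \<Rightarrow> ('a \<Rightarrow> complex) set" where
  "Irr G = {\<chi>. \<exists>n \<rho>. irreducible_rep G n \<rho> \<and>
               \<chi> = (\<lambda>g. if g \<in> carrier G then mat_trace (\<rho> g) else 0)}"

definition char_ker :: "('a, 'b) monoid_scheme \<Rightarrow> ('a \<Rightarrow> complex) \<Rightarrow> 'a set" where
  "char_ker G \<chi> = {g \<in> carrier G. \<chi> g = \<chi> \<one>\<^bsub>G\<^esub>}"

definition Irr_rel :: "('a, 'b) monoid_scheme \<Rightarrow> 'a set \<Rightarrow> ('a \<Rightarrow> complex) set" where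
  "Irr_rel G M = {\<chi> \<in> Irr G. \<not> M \<subseteq> char_ker G \<chi>}"

definition vanishing_off :: "('a, 'b) monoid_scheme \<Rightarrow> 'a set \<Rightarrow> 'a set" where
  "vanishing_off G M = generate G {g \<in> carrier G. \<exists>\<chi> \<in> Irr_rel G M. \<chi> g \<noteq> 0}"

definition commutator_el :: "('a, 'b) monoid_scheme \<Rightarrow> 'a \<Rightarrow> 'a \<Rightarrow> 'a" where
  "commutator_el G g y = inv\<^bsub>G\<^esub> g \<otimes>\<^bsub>G\<^esub> inv\<^bsub>G\<^esub> y \<otimes>\<^bsub>G\<^esub> g \<otimes>\<^bsub>G\<^esub> y"

end

theory Submission
  imports Defs "Jordan_Normal_Form.Spectral_Radius"
begin

definition dropv :: "nat \<Rightarrow> complex vec \<Rightarrow> complex vec" where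
  "dropv m v = vec m (\<lambda>i. v $ i)"
definition extv :: "nat \<Rightarrow> complex vec \<Rightarrow> complex vec" where
  "extv m u = vec (Suc m) (\<lambda>i. if i < m then u $ i else 0)"

lemma carrier_vec_0_eq: "(v::'x::zero vec) \<in> carrier_vec 0 \<Longrightarrow> v = 0\<^sub>v 0"
  by (intro eq_vecI) auto

lemma dropv_carrier[simp]: "dropv m v \<in> carrier_vec m" by (simp add: dropv_def)
lemma extv_carrier[simp]: "extv m v \<in> carrier_vec (Suc m)" by (simp add: extv_def)

lemma extv_dropv: "w \<in> carrier_vec (Suc m) \<Longrightarrow> w $ m = 0 \<Longrightarrow> extv m (dropv m w) = w"
  by (intro eq_vecI) (auto simp: extv_def dropv_def less_Suc_eq)

lemma dropv_add: "v \<in> carrier_vec (Suc m) \<Longrightarrow> w \<in> carrier_vec (Suc m) \<Longrightarrow> dropv m (v + w) = dropv m v + dropv m w"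
  by (intro eq_vecI) (auto simp: dropv_def)
lemma dropv_smult: "v \<in> carrier_vec (Suc m) \<Longrightarrow> dropv m (c \<cdot>\<^sub>v v) = c \<cdot>\<^sub>v dropv m v"
  by (intro eq_vecI) (auto simp: dropv_def)
lemma dropv_zero: "dropv m (0\<^sub>v (Suc m)) = 0\<^sub>v m"
  by (intro eq_vecI) (auto simp: dropv_def)

lemma multB_A:
  assumes B0: "B0 \<in> carrier_mat m k" and y: "y \<in> carrier_vec k"
  shows "mat (Suc m) k (\<lambda>(i,j). if i < m then B0 $$ (i,j) else 0) *\<^sub>v y = extv m (B0 *\<^sub>v y)"
proof (rule eq_vecI)
  fix i assume "i < dim_vec (extv m (B0 *\<^sub>v y))"
  hence i: "i < Suc m" by (simp add: extv_def)
  show "(mat (Suc m) k (\<lambda>(i,j). if i < m then B0 $$ (i,j) else 0) *\<^sub>v y) $ i = extv m (B0 *\<^sub>v y) $ i"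
    using i B0 y by (auto simp: extv_def scalar_prod_def row_def intro!: sum.cong)
qed (simp add: extv_def)

lemma multC_A:
  assumes C0: "C0 \<in> carrier_mat k m" and w: "w \<in> carrier_vec (Suc m)"
  shows "mat k (Suc m) (\<lambda>(i,j). if j < m then C0 $$ (i,j) else 0) *\<^sub>v w = C0 *\<^sub>v dropv m w"
proof (rule eq_vecI)
  fix i assume "i < dim_vec (C0 *\<^sub>v dropv m w)"
  hence i: "i < k" using C0 by simp
  have "(mat k (Suc m) (\<lambda>(i,j). if j < m then C0 $$ (i,j) else 0) *\<^sub>v w) $ i
     = (\<Sum>j<Suc m. (if j < m then C0 $$ (i,j) else 0) * w $ j)"
    using i w by (simp add: scalar_prod_def row_def atLeast0LessThan)
  also have "\<dots> = (\<Sum>j<m. C0 $$ (i,j) * w $ j)" by simp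
  also have "\<dots> = (C0 *\<^sub>v dropv m w) $ i"
    using i C0 by (simp add: scalar_prod_def row_def dropv_def atLeast0LessThan)
  finally show "(mat k (Suc m) (\<lambda>(i,j). if j < m then C0 $$ (i,j) else 0) *\<^sub>v w) $ i = (C0 *\<^sub>v dropv m w) $ i" .
qed (use C0 in simp)

lemma multB_B:
  assumes B0: "B0 \<in> carrier_mat m k" and u: "u \<in> carrier_vec (Suc m)" and y: "y \<in> carrier_vec (Suc k)"
  shows "mat (Suc m) (Suc k) (\<lambda>(i,j). if j < k then (if i < m then B0 $$ (i,j) else 0) else u $ i) *\<^sub>v y
     = extv m (B0 *\<^sub>v dropv k y) + y $ k \<cdot>\<^sub>v u"
proof (rule eq_vecI)
  fix i assume "i < dim_vec (extv m (B0 *\<^sub>v dropv k y) + y $ k \<cdot>\<^sub>v u)"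
  hence i: "i < Suc m" using u by (simp add: extv_def)
  have "(mat (Suc m) (Suc k) (\<lambda>(i,j). if j < k then (if i < m then B0 $$ (i,j) else 0) else u $ i) *\<^sub>v y) $ i
     = (\<Sum>j<Suc k. (if j < k then (if i < m then B0 $$ (i,j) else 0) else u $ i) * y $ j)"
    using i y by (simp add: scalar_prod_def row_def atLeast0LessThan)
  also have "\<dots> = (\<Sum>j<k. (if i < m then B0 $$ (i,j) else 0) * y $ j) + u $ i * y $ k" by simp
  also have "\<dots> = (extv m (B0 *\<^sub>v dropv k y) + y $ k \<cdot>\<^sub>v u) $ i"
    using i B0 u y by (auto simp: extv_def dropv_def scalar_prod_def row_def atLeast0LessThan intro!: sum.cong)
  finally show "(mat (Suc m) (Suc k) (\<lambda>(i,j). if j < k then (if i < m then B0 $$ (i,j) else 0) else u $ i) *\<^sub>v y) $ i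
     = (extv m (B0 *\<^sub>v dropv k y) + y $ k \<cdot>\<^sub>v u) $ i" .
qed (use u in simp)

lemma multC_B:
  assumes C0: "C0 \<in> carrier_mat k m" and u: "u \<in> carrier_vec (Suc m)" and w: "w \<in> carrier_vec (Suc m)"
  shows "mat (Suc k) (Suc m) (\<lambda>(i,j). if i < k then (if j < m then C0 $$ (i,j) else - (C0 *\<^sub>v dropv m u) $ i)
             else (if j = m then 1 else 0)) *\<^sub>v w
     = vec (Suc k) (\<lambda>i. if i < k then (C0 *\<^sub>v dropv m w) $ i - w $ m * (C0 *\<^sub>v dropv m u) $ i else w $ m)"
proof (rule eq_vecI)
  fix i assume "i < dim_vec (vec (Suc k) (\<lambda>i. if i < k then (C0 *\<^sub>v dropv m w) $ i - w $ m * (C0 *\<^sub>v dropv m u) $ i else w $ m))"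
  hence i: "i < Suc k" by simp
  let ?C = "mat (Suc k) (Suc m) (\<lambda>(i,j). if i < k then (if j < m then C0 $$ (i,j) else - (C0 *\<^sub>v dropv m u) $ i)
             else (if j = m then 1 else 0))"
  have "(?C *\<^sub>v w) $ i = (\<Sum>j<Suc m. ?C $$ (i,j) * w $ j)"
    using i w by (simp add: scalar_prod_def row_def atLeast0LessThan)
  also have "\<dots> = (\<Sum>j<m. ?C $$ (i,j) * w $ j) + ?C $$ (i,m) * w $ m" by simp
  also have "\<dots> = (if i < k then (C0 *\<^sub>v dropv m w) $ i - w $ m * (C0 *\<^sub>v dropv m u) $ i else w $ m)"
  proof (cases "i < k")
    case True
    have "(\<Sum>j<m. ?C $$ (i,j) * w $ j) = (C0 *\<^sub>v dropv m w) $ i"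
      using True i C0 by (auto simp: dropv_def scalar_prod_def row_def atLeast0LessThan intro!: sum.cong)
    then show ?thesis using True i by simp
  next
    case False
    then show ?thesis using i by simp
  qed
  finally show "(?C *\<^sub>v w) $ i = vec (Suc k) (\<lambda>i. if i < k then (C0 *\<^sub>v dropv m w) $ i - w $ m * (C0 *\<^sub>v dropv m u) $ i else w $ m) $ i"
    using i by simp
qed simp

lemma dropv_extv: "v \<in> carrier_vec m \<Longrightarrow> dropv m (extv m v) = v"
  by (intro eq_vecI) (auto simp: extv_def dropv_def)

lemma subspace_basis:
  fixes W :: "complex vec set"
  assumes "W \<subseteq> carrier_vec m" "0\<^sub>v m \<in> W" "\<And>v w. v \<in> W \<Longrightarrow> w \<in> W \<Longrightarrow> v + w \<in> W"
    "\<And>c v. v \<in> W \<Longrightarrow> c \<cdot>\<^sub>v v \<in> W"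
  shows "\<exists>k B C. B \<in> carrier_mat m k \<and> C \<in> carrier_mat k m \<and> (\<forall>x\<in>carrier_vec k. C *\<^sub>v (B *\<^sub>v x) = x)
     \<and> (\<forall>x\<in>carrier_vec k. B *\<^sub>v x \<in> W) \<and> (\<forall>w\<in>W. B *\<^sub>v (C *\<^sub>v w) = w)"
  using assms
proof (induction m arbitrary: W)
  case 0
  have W: "w = 0\<^sub>v 0" if "w \<in> W" for w using that 0 carrier_vec_0_eq by blast
  show ?case
  proof (intro exI conjI ballI)
    show "(0\<^sub>m 0 0 :: complex mat) \<in> carrier_mat 0 0" "(0\<^sub>m 0 0 :: complex mat) \<in> carrier_mat 0 0" by simp_all
    fix x :: "complex vec" assume x: "x \<in> carrier_vec 0"
    show "0\<^sub>m 0 0 *\<^sub>v (0\<^sub>m 0 0 *\<^sub>v x) = x" using x by (intro eq_vecI) auto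
    show "0\<^sub>m 0 0 *\<^sub>v x \<in> W"
    proof -
      have "0\<^sub>m 0 0 *\<^sub>v x = 0\<^sub>v 0" by (intro eq_vecI) auto
      thus ?thesis using 0 by simp
    qed
  next
    fix w assume "w \<in> W"
    hence "w = 0\<^sub>v 0" using W by blast
    moreover have "0\<^sub>m 0 0 *\<^sub>v (0\<^sub>m 0 0 *\<^sub>v w) \<in> carrier_vec 0" by (intro carrier_vecI) simp
    ultimately show "0\<^sub>m 0 0 *\<^sub>v (0\<^sub>m 0 0 *\<^sub>v w) = w" using carrier_vec_0_eq by metis
  qed
next
  case (Suc m)
  note WC = Suc.prems(1)
  define W0 where "W0 = {dropv m w | w. w \<in> W \<and> w $ m = 0}"
  have W0a: "W0 \<subseteq> carrier_vec m" unfolding W0_def by auto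
  have W0b: "0\<^sub>v m \<in> W0" unfolding W0_def using Suc.prems(2) dropv_zero[of m] by force
  have W0c: "v + w \<in> W0" if vw: "v \<in> W0" "w \<in> W0" for v w
  proof -
    obtain v' where v': "v = dropv m v'" "v' \<in> W" "v' $ m = 0"
      using vw(1) unfolding W0_def by auto
    obtain w' where w': "w = dropv m w'" "w' \<in> W" "w' $ m = 0"
      using vw(2) unfolding W0_def by auto
    have c: "v' \<in> carrier_vec (Suc m)" "w' \<in> carrier_vec (Suc m)" using v' w' WC by auto
    have "v' + w' \<in> W" using Suc.prems(3) v' w' by auto
    moreover have "(v' + w') $ m = 0" using c v' w' by simp
    moreover have "v + w = dropv m (v' + w')" using c v' w' by (simp add: dropv_add)
    ultimately show ?thesis unfolding W0_def by blast
  qed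
  have W0d: "c \<cdot>\<^sub>v v \<in> W0" if vw: "v \<in> W0" for c v
  proof -
    obtain v' where v': "v = dropv m v'" "v' \<in> W" "v' $ m = 0"
      using vw unfolding W0_def by auto
    have cc: "v' \<in> carrier_vec (Suc m)" using v' WC by auto
    have "c \<cdot>\<^sub>v v' \<in> W" using Suc.prems(4) v' by auto
    moreover have "(c \<cdot>\<^sub>v v') $ m = 0" using cc v' by simp
    moreover have "c \<cdot>\<^sub>v v = dropv m (c \<cdot>\<^sub>v v')" using cc v' by (simp add: dropv_smult)
    ultimately show ?thesis unfolding W0_def by blast
  qed
  obtain k B0 C0 where B0: "B0 \<in> carrier_mat m k" and C0: "C0 \<in> carrier_mat k m"
    and ii: "\<forall>x\<in>carrier_vec k. C0 *\<^sub>v (B0 *\<^sub>v x) = x" and iii: "\<forall>x\<in>carrier_vec k. B0 *\<^sub>v x \<in> W0"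
    and iv: "\<forall>w\<in>W0. B0 *\<^sub>v (C0 *\<^sub>v w) = w"
    using Suc.IH[OF W0a W0b W0c W0d] by blast
  have ext_in: "extv m v \<in> W" if "v \<in> W0" for v
    using that unfolding W0_def using extv_dropv WC by auto
  show ?case
  proof (cases "\<exists>u\<in>W. u $ m \<noteq> 0")
    case False
    define B where "B = mat (Suc m) k (\<lambda>(i,j). if i < m then B0 $$ (i,j) else 0)"
    define C where "C = mat k (Suc m) (\<lambda>(i,j). if j < m then C0 $$ (i,j) else 0)"
    have Bv: "B *\<^sub>v y = extv m (B0 *\<^sub>v y)" if "y \<in> carrier_vec k" for y
      unfolding B_def using multB_A[OF B0 that] .
    have Cv: "C *\<^sub>v w = C0 *\<^sub>v dropv m w" if "w \<in> carrier_vec (Suc m)" for w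
      unfolding C_def using multC_A[OF C0 that] .
    show ?thesis
    proof (intro exI conjI ballI)
      show "B \<in> carrier_mat (Suc m) k" "C \<in> carrier_mat k (Suc m)" unfolding B_def C_def by auto
      fix x :: "complex vec" assume x: "x \<in> carrier_vec k"
      show "C *\<^sub>v (B *\<^sub>v x) = x" using x B0 ii by (simp add: Bv Cv dropv_extv)
      show "B *\<^sub>v x \<in> W" using x iii ext_in by (simp add: Bv)
    next
      fix w assume w: "w \<in> W"
      have wc: "w \<in> carrier_vec (Suc m)" using w WC by auto
      have "w $ m = 0" using False w by auto
      hence d: "dropv m w \<in> W0" unfolding W0_def using w by auto
      show "B *\<^sub>v (C *\<^sub>v w) = w" using wc C0 iv d \<open>w $ m = 0\<close>
        by (simp add: Bv Cv extv_dropv)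
    qed
  next
    case True
    then obtain u0 where u0: "u0 \<in> W" "u0 $ m \<noteq> 0" by auto
    define u where "u = (1 / u0 $ m) \<cdot>\<^sub>v u0"
    have uW: "u \<in> W" unfolding u_def using Suc.prems(4) u0 by auto
    have uc: "u \<in> carrier_vec (Suc m)" using uW WC by auto
    have um: "u $ m = 1" unfolding u_def using u0 WC by auto
    define B where "B = mat (Suc m) (Suc k) (\<lambda>(i,j). if j < k then (if i < m then B0 $$ (i,j) else 0) else u $ i)"
    define C where "C = mat (Suc k) (Suc m) (\<lambda>(i,j). if i < k then (if j < m then C0 $$ (i,j) else - (C0 *\<^sub>v dropv m u) $ i)
             else (if j = m then 1 else 0))"
    have Bv: "B *\<^sub>v y = extv m (B0 *\<^sub>v dropv k y) + y $ k \<cdot>\<^sub>v u" if "y \<in> carrier_vec (Suc k)" for y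
      unfolding B_def using multB_B[OF B0 uc that] .
    have Cv: "C *\<^sub>v w = vec (Suc k) (\<lambda>i. if i < k then (C0 *\<^sub>v dropv m w) $ i - w $ m * (C0 *\<^sub>v dropv m u) $ i else w $ m)"
      if "w \<in> carrier_vec (Suc m)" for w
      unfolding C_def using multC_B[OF C0 uc that] .
    show ?thesis
    proof (intro exI conjI ballI)
      show "B \<in> carrier_mat (Suc m) (Suc k)" "C \<in> carrier_mat (Suc k) (Suc m)" unfolding B_def C_def by auto
      fix x :: "complex vec" assume x: "x \<in> carrier_vec (Suc k)"
      define w where "w = B *\<^sub>v x"
      have w: "w = extv m (B0 *\<^sub>v dropv k x) + x $ k \<cdot>\<^sub>v u" unfolding w_def using Bv x by simp
      have wc: "w \<in> carrier_vec (Suc m)" using w uc by simp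
      have wm: "w $ m = x $ k" using w uc um by (simp add: extv_def)
      have dw: "dropv m w = B0 *\<^sub>v dropv k x + x $ k \<cdot>\<^sub>v dropv m u"
        unfolding w using uc B0 by (subst dropv_add) (auto simp: dropv_smult dropv_extv)
      have cdw: "C0 *\<^sub>v dropv m w = dropv k x + x $ k \<cdot>\<^sub>v (C0 *\<^sub>v dropv m u)"
        unfolding dw using B0 C0 ii
        by (simp add: mult_add_distrib_mat_vec[of C0 k m] mult_mat_vec[of C0 k m])
      show "C *\<^sub>v (B *\<^sub>v x) = x"
        unfolding w_def[symmetric] Cv[OF wc] cdw wm
        using x C0 by (intro eq_vecI) (auto simp: dropv_def less_Suc_eq)
      show "B *\<^sub>v x \<in> W"
        unfolding w_def[symmetric] w
        using Suc.prems(3,4) ext_in iii uW by simp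
    next
      fix w assume w: "w \<in> W"
      have wc: "w \<in> carrier_vec (Suc m)" using w WC by auto
      define w' where "w' = w + (- w $ m) \<cdot>\<^sub>v u"
      have w'W: "w' \<in> W" unfolding w'_def using w uW Suc.prems(3,4) by auto
      have w'm: "w' $ m = 0" unfolding w'_def using wc uc um by simp
      define d where "d = dropv m w'"
      have dW0: "d \<in> W0" unfolding d_def W0_def using w'W w'm by auto
      have dd: "dropv m w' = dropv m w + (- w $ m) \<cdot>\<^sub>v dropv m u"
        unfolding w'_def using wc uc by (simp add: dropv_add dropv_smult)
      have Cd: "C0 *\<^sub>v d = C0 *\<^sub>v dropv m w + (- w $ m) \<cdot>\<^sub>v (C0 *\<^sub>v dropv m u)"
        unfolding d_def dd using C0
        by (simp add: mult_add_distrib_mat_vec[of C0 k m] mult_mat_vec[of C0 k m])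
      define y where "y = C *\<^sub>v w"
      have yc: "y \<in> carrier_vec (Suc k)" unfolding y_def C_def by (intro carrier_vecI) simp
      have dy: "dropv k y = C0 *\<^sub>v d"
        unfolding y_def Cv[OF wc] Cd using C0 by (intro eq_vecI) (auto simp: dropv_def)
      have yk: "y $ k = w $ m" unfolding y_def Cv[OF wc] by simp
      have "B *\<^sub>v y = extv m d + w $ m \<cdot>\<^sub>v u"
        using Bv[OF yc] dy yk iv dW0 by simp
      also have "\<dots> = w' + w $ m \<cdot>\<^sub>v u" unfolding d_def using extv_dropv[OF _ w'm] w'W WC by auto
      also have "\<dots> = w" unfolding w'_def using wc uc by (intro eq_vecI) auto
      finally show "B *\<^sub>v (C *\<^sub>v w) = w" unfolding y_def .
    qed
  qed
qed


lemma eq_mat_on_vec: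
  fixes A B :: "'x::comm_ring_1 mat"
  assumes A: "A \<in> carrier_mat n m" and B: "B \<in> carrier_mat n m"
    and eq: "\<And>x. x \<in> carrier_vec m \<Longrightarrow> A *\<^sub>v x = B *\<^sub>v x"
  shows "A = B"
proof (rule eq_matI)
  fix i j assume i: "i < dim_row B" and j: "j < dim_col B"
  have "A $$ (i,j) = (A *\<^sub>v unit_vec m j) $ i"
    using A B i j by (simp add: scalar_prod_def row_def unit_vec_def
        sum.cong[OF refl, of _ "\<lambda>k. if k = j then A $$ (i,k) else 0"] if_distrib cong: if_cong)
  also have "\<dots> = (B *\<^sub>v unit_vec m j) $ i" using eq[of "unit_vec m j"] by simp
  also have "\<dots> = B $$ (i,j)"
    using A B i j by (simp add: scalar_prod_def row_def unit_vec_def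
        sum.cong[OF refl, of _ "\<lambda>k. if k = j then B $$ (i,k) else 0"] if_distrib cong: if_cong)
  finally show "A $$ (i,j) = B $$ (i,j)" .
qed (use A B in auto)

lemma trace_comm:
  fixes A B :: "complex mat"
  assumes A: "A \<in> carrier_mat n m" and B: "B \<in> carrier_mat m n"
  shows "mat_trace (A * B) = mat_trace (B * A)"
proof -
  have "mat_trace (A * B) = (\<Sum>i<n. \<Sum>j<m. A $$ (i,j) * B $$ (j,i))"
    using A B by (simp add: mat_trace_def scalar_prod_def row_def col_def atLeast0LessThan)
  also have "\<dots> = (\<Sum>j<m. \<Sum>i<n. B $$ (j,i) * A $$ (i,j))"
    by (subst sum.swap) (simp add: mult.commute)
  also have "\<dots> = mat_trace (B * A)"
    using A B by (simp add: mat_trace_def scalar_prod_def row_def col_def atLeast0LessThan)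
  finally show ?thesis .
qed

lemma trace_add: "A \<in> carrier_mat n n \<Longrightarrow> B \<in> carrier_mat n n \<Longrightarrow> mat_trace (A + B) = mat_trace A + mat_trace B"
  by (simp add: mat_trace_def sum.distrib)
lemma trace_minus: "A \<in> carrier_mat n n \<Longrightarrow> B \<in> carrier_mat n n \<Longrightarrow> mat_trace (A - B) = mat_trace A - mat_trace B"
  by (simp add: mat_trace_def sum_subtractf)
lemma trace_one: "mat_trace (1\<^sub>m n :: complex mat) = of_nat n"
  by (simp add: mat_trace_def)
lemma trace_smult: "A \<in> carrier_mat n n \<Longrightarrow> mat_trace (c \<cdot>\<^sub>m (A :: complex mat)) = c * mat_trace A"
  by (simp add: mat_trace_def sum_distrib_left)
lemma trace_zero_dim: "A \<in> carrier_mat 0 0 \<Longrightarrow> mat_trace A = 0"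
  by (simp add: mat_trace_def)


lemma mat_vec_zero_k: "B \<in> carrier_mat k n \<Longrightarrow> B *\<^sub>v 0\<^sub>v n = (0\<^sub>v k :: complex vec)"
  by (intro eq_vecI) (auto simp: scalar_prod_def)

lemma mult3_vec:
  assumes "A \<in> carrier_mat n1 n2" "B \<in> carrier_mat n2 n3" "C \<in> carrier_mat n3 n4" "v \<in> carrier_vec n4"
  shows "(A * B * C) *\<^sub>v v = A *\<^sub>v (B *\<^sub>v (C *\<^sub>v (v :: complex vec)))"
proof -
  have "(A * B * C) *\<^sub>v v = (A * B) *\<^sub>v (C *\<^sub>v v)" using assms by (intro assoc_mult_mat_vec) auto
  also have "\<dots> = A *\<^sub>v (B *\<^sub>v (C *\<^sub>v v))" using assms by (intro assoc_mult_mat_vec) auto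
  finally show ?thesis .
qed

lemma mult4_vec:
  assumes "A \<in> carrier_mat n1 n2" "B \<in> carrier_mat n2 n3" "C \<in> carrier_mat n3 n4" "D \<in> carrier_mat n4 n5" "v \<in> carrier_vec n5"
  shows "(A * B * C * D) *\<^sub>v v = A *\<^sub>v (B *\<^sub>v (C *\<^sub>v (D *\<^sub>v (v :: complex vec))))"
proof -
  have "(A * B * C * D) *\<^sub>v v = (A * B * C) *\<^sub>v (D *\<^sub>v v)" using assms by (intro assoc_mult_mat_vec) auto
  also have "\<dots> = A *\<^sub>v (B *\<^sub>v (C *\<^sub>v (D *\<^sub>v v)))" using assms by (intro mult3_vec) auto
  finally show ?thesis .
qed

lemma char_decomp:
  fixes G :: "('a,'b) monoid_scheme" and c :: "'a \<Rightarrow> complex"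
  assumes H: "\<And>n R. irreducible_rep G n R \<Longrightarrow> (\<Sum>g\<in>carrier G. c g * mat_trace (R g)) = 0"
  shows "is_rep G k R \<Longrightarrow> (\<Sum>g\<in>carrier G. c g * mat_trace (R g)) = 0"
proof (induction k arbitrary: R rule: less_induct)
  case (less k R)
  note rep = less.prems
  have Rc: "\<And>g. g \<in> carrier G \<Longrightarrow> R g \<in> carrier_mat k k"
    and Rm: "\<And>g h. g \<in> carrier G \<Longrightarrow> h \<in> carrier G \<Longrightarrow> R (g \<otimes>\<^bsub>G\<^esub> h) = R g * R h"
    and R1: "R \<one>\<^bsub>G\<^esub> = 1\<^sub>m k" using rep unfolding is_rep_def by auto
  show ?case
  proof (cases "irreducible_rep G k R")
    case True thus ?thesis using H by blast
  next
    case nirr: False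
    show ?thesis
    proof (cases "k = 0")
      case True thus ?thesis using Rc trace_zero_dim by simp
    next
      case False
      then obtain W where Winv: "invariant_subspace G k R W" and W0: "W \<noteq> {0\<^sub>v k}" and W1: "W \<noteq> carrier_vec k"
        using nirr rep unfolding irreducible_rep_def by auto
      from Winv have Wc: "W \<subseteq> carrier_vec k" "0\<^sub>v k \<in> W" "\<And>v w. v\<in>W \<Longrightarrow> w\<in>W \<Longrightarrow> v+w\<in>W"
        "\<And>c v. v\<in>W \<Longrightarrow> c \<cdot>\<^sub>v v \<in> W" "\<And>g v. g \<in> carrier G \<Longrightarrow> v\<in>W \<Longrightarrow> R g *\<^sub>v v \<in> W"
        unfolding invariant_subspace_def by auto
      obtain j B C where B: "B \<in> carrier_mat k j" and C: "C \<in> carrier_mat j k"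
        and ii: "\<forall>x\<in>carrier_vec j. C *\<^sub>v (B *\<^sub>v x) = x" and iii: "\<forall>x\<in>carrier_vec j. B *\<^sub>v x \<in> W"
        and iv: "\<forall>w\<in>W. B *\<^sub>v (C *\<^sub>v w) = w"
        using subspace_basis[OF Wc(1-4)] by blast
      define E where "E = B * C"
      have Ec: "E \<in> carrier_mat k k" using B C by (simp add: E_def)
      define Q where "Q = 1\<^sub>m k - E"
      have Qc: "Q \<in> carrier_mat k k" using Ec unfolding Q_def by (intro minus_carrier_mat) auto
      have Ev: "E *\<^sub>v v = B *\<^sub>v (C *\<^sub>v v)" if "v \<in> carrier_vec k" for v
        using that B C by (simp add: E_def)
      have Qv: "Q *\<^sub>v v = v - E *\<^sub>v v" if "v \<in> carrier_vec k" for v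
        using that Ec by (simp add: Q_def minus_mult_distrib_mat_vec[of _ k k])
      have EE: "E *\<^sub>v (E *\<^sub>v v) = E *\<^sub>v v" if "v \<in> carrier_vec k" for v
      proof -
        have "C *\<^sub>v v \<in> carrier_vec j" using that C by simp
        thus ?thesis using that B C ii Ev by simp
      qed
      have QE: "Q *\<^sub>v (E *\<^sub>v v) = 0\<^sub>v k" if "v \<in> carrier_vec k" for v
        using that Ec EE Qv by simp
      have EQ: "E *\<^sub>v (Q *\<^sub>v v) = 0\<^sub>v k" if "v \<in> carrier_vec k" for v
        using that Ec EE Qv by (simp add: mult_minus_distrib_mat_vec[of _ k k])
      have QQ: "Q *\<^sub>v (Q *\<^sub>v v) = Q *\<^sub>v v" if "v \<in> carrier_vec k" for v
      proof -
        have "Q *\<^sub>v v \<in> carrier_vec k" using that Qc by simp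
        thus ?thesis using Qv EQ that by simp
      qed
      define W' where "W' = {Q *\<^sub>v v | v. v \<in> carrier_vec k}"
      have W'a: "W' \<subseteq> carrier_vec k" unfolding W'_def using Qc by auto
      have W'b: "0\<^sub>v k \<in> W'" unfolding W'_def using mat_vec_zero_k[OF Qc] zero_carrier_vec by (metis (mono_tags, lifting) mem_Collect_eq)
      have W'c: "v + w \<in> W'" if vw: "v \<in> W'" "w \<in> W'" for v w
      proof -
        obtain v' w' where "v = Q *\<^sub>v v'" "w = Q *\<^sub>v w'" "v' \<in> carrier_vec k" "w' \<in> carrier_vec k"
          using vw unfolding W'_def by blast
        moreover have "Q *\<^sub>v (v' + w') = Q *\<^sub>v v' + Q *\<^sub>v w'"
          using calculation Qc by (simp add: mult_add_distrib_mat_vec[of _ k k])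
        ultimately show ?thesis unfolding W'_def by (metis (mono_tags, lifting) add_carrier_vec mem_Collect_eq)
      qed
      have W'd: "a \<cdot>\<^sub>v v \<in> W'" if vw: "v \<in> W'" for a v
      proof -
        obtain v' where "v = Q *\<^sub>v v'" "v' \<in> carrier_vec k"
          using vw unfolding W'_def by blast
        moreover have "Q *\<^sub>v (a \<cdot>\<^sub>v v') = a \<cdot>\<^sub>v (Q *\<^sub>v v')"
          using calculation Qc by (simp add: mult_mat_vec[of _ k k])
        ultimately show ?thesis unfolding W'_def by (metis (mono_tags, lifting) smult_carrier_vec mem_Collect_eq)
      qed
      obtain j' B' C' where B': "B' \<in> carrier_mat k j'" and C': "C' \<in> carrier_mat j' k"
        and ii': "\<forall>x\<in>carrier_vec j'. C' *\<^sub>v (B' *\<^sub>v x) = x" and iii': "\<forall>x\<in>carrier_vec j'. B' *\<^sub>v x \<in> W'"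
        and iv': "\<forall>w\<in>W'. B' *\<^sub>v (C' *\<^sub>v w) = w"
        using subspace_basis[OF W'a W'b W'c W'd] by blast
      have F2: "E *\<^sub>v (R g *\<^sub>v (B *\<^sub>v x)) = R g *\<^sub>v (B *\<^sub>v x)" if "g \<in> carrier G" "x \<in> carrier_vec j" for g x
      proof -
        have "R g *\<^sub>v (B *\<^sub>v x) \<in> W" using Wc(5) iii that by auto
        thus ?thesis using iv Ev Wc(1) by auto
      qed
      have F5: "Q *\<^sub>v (R g *\<^sub>v (Q *\<^sub>v v)) = Q *\<^sub>v (R g *\<^sub>v v)" if g: "g \<in> carrier G" and v: "v \<in> carrier_vec k" for g v
      proof -
        have Cv: "C *\<^sub>v v \<in> carrier_vec j" using v C by simp
        have "R g *\<^sub>v (E *\<^sub>v v) = E *\<^sub>v (R g *\<^sub>v (E *\<^sub>v v))" using F2[OF g Cv] Ev[OF v] by simp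
        hence "Q *\<^sub>v (R g *\<^sub>v (E *\<^sub>v v)) = Q *\<^sub>v (E *\<^sub>v (R g *\<^sub>v (E *\<^sub>v v)))" by (rule arg_cong)
        also have "\<dots> = 0\<^sub>v k" by (rule QE) (use Rc[OF g] Ec v in simp)
        finally have 1: "Q *\<^sub>v (R g *\<^sub>v (E *\<^sub>v v)) = 0\<^sub>v k" .
        have "Q *\<^sub>v (R g *\<^sub>v (Q *\<^sub>v v)) = Q *\<^sub>v (R g *\<^sub>v v - R g *\<^sub>v (E *\<^sub>v v))"
          using Qv v Rc[OF g] Ec by (simp add: mult_minus_distrib_mat_vec[of _ k k])
        also have "\<dots> = Q *\<^sub>v (R g *\<^sub>v v) - Q *\<^sub>v (R g *\<^sub>v (E *\<^sub>v v))"
          using v Rc[OF g] Ec Qc by (simp add: mult_minus_distrib_mat_vec[of _ k k])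
        also have "\<dots> = Q *\<^sub>v (R g *\<^sub>v v)" using 1 v Rc[OF g] Qc by simp
        finally show ?thesis .
      qed
      have F3: "Q *\<^sub>v (B' *\<^sub>v x) = B' *\<^sub>v x" if xx: "x \<in> carrier_vec j'" for x
      proof -
        obtain v where "B' *\<^sub>v x = Q *\<^sub>v v" "v \<in> carrier_vec k" using iii' xx unfolding W'_def by blast
        thus ?thesis using QQ by simp
      qed
      have F4: "B' *\<^sub>v (C' *\<^sub>v (Q *\<^sub>v v)) = Q *\<^sub>v v" if "v \<in> carrier_vec k" for v
        using iv' that unfolding W'_def by blast
      define R1 where "R1 = (\<lambda>g. C * R g * B)"
      define R2 where "R2 = (\<lambda>g. C' * Q * R g * B')"
      have R1c: "R1 g \<in> carrier_mat j j" if "g \<in> carrier G" for g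
        unfolding R1_def using B C Rc[OF that] by auto
      have R2c: "R2 g \<in> carrier_mat j' j'" if "g \<in> carrier G" for g
        unfolding R2_def using B' C' Qc Rc[OF that] by auto
      have R1v: "R1 g *\<^sub>v x = C *\<^sub>v (R g *\<^sub>v (B *\<^sub>v x))" if "g \<in> carrier G" "x \<in> carrier_vec j" for g x
        unfolding R1_def using C Rc[OF that(1)] B that(2) by (rule mult3_vec)
      have R2v: "R2 g *\<^sub>v x = C' *\<^sub>v (Q *\<^sub>v (R g *\<^sub>v (B' *\<^sub>v x)))" if "g \<in> carrier G" "x \<in> carrier_vec j'" for g x
        unfolding R2_def using C' Qc Rc[OF that(1)] B' that(2) by (rule mult4_vec)
      have rep1: "is_rep G j R1"
        unfolding is_rep_def
      proof (intro conjI ballI)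
        fix g assume "g \<in> carrier G" thus "R1 g \<in> carrier_mat j j" by (rule R1c)
      next
        fix g h assume g: "g \<in> carrier G" and h: "h \<in> carrier G"
        show "R1 (g \<otimes>\<^bsub>G\<^esub> h) = R1 g * R1 h"
        proof (rule eq_mat_on_vec[of _ j j])
          show "R1 (g \<otimes>\<^bsub>G\<^esub> h) \<in> carrier_mat j j" unfolding R1_def using B C Rc[OF g] Rc[OF h] Rm[OF g h] by auto
          show "R1 g * R1 h \<in> carrier_mat j j" using R1c[OF g] R1c[OF h] by auto
          fix x :: "complex vec" assume x: "x \<in> carrier_vec j"
          have Rhx: "R h *\<^sub>v (B *\<^sub>v x) \<in> carrier_vec k" using x B Rc[OF h] by simp
          have "(R1 g * R1 h) *\<^sub>v x = R1 g *\<^sub>v (R1 h *\<^sub>v x)" using R1c[OF g] R1c[OF h] x by simp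
          also have "\<dots> = C *\<^sub>v (R g *\<^sub>v (E *\<^sub>v (R h *\<^sub>v (B *\<^sub>v x))))"
            using R1v g h x C Rc[OF h] B Ev[OF Rhx] by simp
          also have "\<dots> = C *\<^sub>v (R g *\<^sub>v (R h *\<^sub>v (B *\<^sub>v x)))" using F2[OF h x] by simp
          also have "\<dots> = R1 (g \<otimes>\<^bsub>G\<^esub> h) *\<^sub>v x"
            unfolding R1_def Rm[OF g h] using mult3_vec[of C j k "R g * R h" k B j x] B C Rc[OF g] Rc[OF h] x by simp
          finally show "R1 (g \<otimes>\<^bsub>G\<^esub> h) *\<^sub>v x = (R1 g * R1 h) *\<^sub>v x" by simp
        qed
      next
        show "R1 \<one>\<^bsub>G\<^esub> = 1\<^sub>m j"
        proof (rule eq_mat_on_vec[of _ j j])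
          show "R1 \<one>\<^bsub>G\<^esub> \<in> carrier_mat j j" unfolding R1_def R1 using B C by auto
          fix x :: "complex vec" assume x: "x \<in> carrier_vec j"
          show "R1 \<one>\<^bsub>G\<^esub> *\<^sub>v x = 1\<^sub>m j *\<^sub>v x" unfolding R1_def R1 using B C x ii by simp
        qed simp
      qed
      have rep2: "is_rep G j' R2"
        unfolding is_rep_def
      proof (intro conjI ballI)
        fix g assume "g \<in> carrier G" thus "R2 g \<in> carrier_mat j' j'" by (rule R2c)
      next
        fix g h assume g: "g \<in> carrier G" and h: "h \<in> carrier G"
        show "R2 (g \<otimes>\<^bsub>G\<^esub> h) = R2 g * R2 h"
        proof (rule eq_mat_on_vec[of _ j' j'])
          show "R2 (g \<otimes>\<^bsub>G\<^esub> h) \<in> carrier_mat j' j'" unfolding R2_def using B' C' Qc Rc[OF g] Rc[OF h] Rm[OF g h] by auto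
          show "R2 g * R2 h \<in> carrier_mat j' j'" using R2c[OF g] R2c[OF h] by auto
          fix x :: "complex vec" assume x: "x \<in> carrier_vec j'"
          have Rhx: "R h *\<^sub>v (B' *\<^sub>v x) \<in> carrier_vec k" using x B' Rc[OF h] by simp
          have "(R2 g * R2 h) *\<^sub>v x = R2 g *\<^sub>v (R2 h *\<^sub>v x)" using R2c[OF g] R2c[OF h] x by simp
          also have "\<dots> = C' *\<^sub>v (Q *\<^sub>v (R g *\<^sub>v (B' *\<^sub>v (C' *\<^sub>v (Q *\<^sub>v (R h *\<^sub>v (B' *\<^sub>v x)))))))"
            using R2v g h x C' Rc[OF h] B' Qc by simp
          also have "\<dots> = C' *\<^sub>v (Q *\<^sub>v (R g *\<^sub>v (Q *\<^sub>v (R h *\<^sub>v (B' *\<^sub>v x)))))" using F4[OF Rhx] by simp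
          also have "\<dots> = C' *\<^sub>v (Q *\<^sub>v (R g *\<^sub>v (R h *\<^sub>v (B' *\<^sub>v x))))" using F5[OF g Rhx] by simp
          also have "\<dots> = R2 (g \<otimes>\<^bsub>G\<^esub> h) *\<^sub>v x"
            unfolding R2_def Rm[OF g h] using mult4_vec[of C' j' k Q k "R g * R h" k B' j' x] B' C' Qc Rc[OF g] Rc[OF h] x by simp
          finally show "R2 (g \<otimes>\<^bsub>G\<^esub> h) *\<^sub>v x = (R2 g * R2 h) *\<^sub>v x" by simp
        qed
      next
        show "R2 \<one>\<^bsub>G\<^esub> = 1\<^sub>m j'"
        proof (rule eq_mat_on_vec[of _ j' j'])
          show "R2 \<one>\<^bsub>G\<^esub> \<in> carrier_mat j' j'" unfolding R2_def R1 using B' C' Qc by auto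
          fix x :: "complex vec" assume x: "x \<in> carrier_vec j'"
          show "R2 \<one>\<^bsub>G\<^esub> *\<^sub>v x = 1\<^sub>m j' *\<^sub>v x" unfolding R2_def R1
            using mult4_vec[of C' j' k Q k "1\<^sub>m k" k B' j' x] B' C' Qc x ii' F3 by simp
        qed simp
      qed
      have CB: "C * B = 1\<^sub>m j" by (rule eq_mat_on_vec[of _ j j]) (use B C ii in auto)
      have BCQ: "B' * C' * Q = Q"
      proof (rule eq_mat_on_vec[of _ k k])
        fix x :: "complex vec" assume x: "x \<in> carrier_vec k"
        show "(B' * C' * Q) *\<^sub>v x = Q *\<^sub>v x" using mult3_vec[OF B' C' Qc x] F4[OF x] by simp
      qed (use B' C' Qc in auto)
      have QBC: "Q * (B' * C') = B' * C'"
      proof (rule eq_mat_on_vec[of _ k k])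
        fix x :: "complex vec" assume x: "x \<in> carrier_vec k"
        have "C' *\<^sub>v x \<in> carrier_vec j'" using x C' by simp
        moreover have "B' * C' \<in> carrier_mat k k" using B' C' by simp
        ultimately show "(Q * (B' * C')) *\<^sub>v x = (B' * C') *\<^sub>v x"
          using F3 assoc_mult_mat_vec[OF Qc _ x, of "B' * C'"] assoc_mult_mat_vec[OF B' C' x] by simp
      qed (use B' C' Qc in auto)
      have trR: "mat_trace (R g) = mat_trace (R1 g) + mat_trace (R2 g)" if g: "g \<in> carrier G" for g
      proof -
        have "mat_trace (R1 g) = mat_trace (C * (R g * B))" unfolding R1_def using B C Rc[OF g] by simp
        also have "\<dots> = mat_trace ((R g * B) * C)" using trace_comm[of C j k "R g * B"] B C Rc[OF g] by simp
        also have "\<dots> = mat_trace (R g * E)" unfolding E_def using B C Rc[OF g] by simp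
        also have "\<dots> = mat_trace (E * R g)" using trace_comm[of "R g" k k E] Ec Rc[OF g] by simp
        finally have t1: "mat_trace (R1 g) = mat_trace (E * R g)" .
        have "mat_trace (R2 g) = mat_trace ((C' * Q * R g) * B')" unfolding R2_def by simp
        also have "\<dots> = mat_trace (B' * (C' * Q * R g))" using trace_comm[of "C' * Q * R g" j' k B'] B' C' Qc Rc[OF g] by simp
        also have "\<dots> = mat_trace ((B' * C' * Q) * R g)"
        proof -
          have CQ: "C' * Q \<in> carrier_mat j' k" using C' Qc by simp
          have "B' * (C' * Q * R g) = B' * (C' * (Q * R g))" using assoc_mult_mat[OF C' Qc Rc[OF g]] by simp
          moreover have "(B' * C' * Q) * R g = B' * (C' * (Q * R g))"
            using assoc_mult_mat[OF B' C' Qc] assoc_mult_mat[OF B' CQ Rc[OF g]] assoc_mult_mat[OF C' Qc Rc[OF g]] by simp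
          ultimately show ?thesis by simp
        qed
        also have "\<dots> = mat_trace (Q * R g)" unfolding BCQ ..
        also have "\<dots> = mat_trace (R g - E * R g)" unfolding Q_def using Ec Rc[OF g]
          by (simp add: minus_mult_distrib_mat[of _ k k])
        also have "\<dots> = mat_trace (R g) - mat_trace (E * R g)" using Ec Rc[OF g] by (simp add: trace_minus[of _ k])
        finally show ?thesis using t1 by simp
      qed
      have dimj: "of_nat j = mat_trace E"
      proof -
        have "(of_nat j :: complex) = mat_trace (C * B)" unfolding CB trace_one ..
        also have "\<dots> = mat_trace E" unfolding E_def using trace_comm[OF C B] .
        finally show ?thesis .
      qed
      have dimj': "of_nat j' = mat_trace Q"
      proof -
        have CB': "C' * B' = 1\<^sub>m j'" by (rule eq_mat_on_vec[of _ j' j']) (use B' C' ii' in auto)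
        have "(of_nat j' :: complex) = mat_trace (C' * B')" unfolding CB' trace_one ..
        also have "\<dots> = mat_trace (B' * C')" using trace_comm[OF C' B'] .
        also have "\<dots> = mat_trace (Q * (B' * C'))" unfolding QBC ..
        also have "\<dots> = mat_trace ((B' * C') * Q)" using trace_comm[of Q k k "B' * C'"] Qc B' C' by simp
        also have "\<dots> = mat_trace Q" using BCQ by simp
        finally show ?thesis .
      qed
      have "of_nat j + of_nat j' = (of_nat k :: complex)"
        unfolding dimj dimj' Q_def using Ec by (simp add: trace_minus[of _ k] trace_one)
      hence jk: "j + j' = k" by (metis of_nat_add of_nat_eq_iff)
      have j0: "j \<noteq> 0"
      proof
        assume j: "j = 0"
        have "W \<subseteq> {0\<^sub>v k}"
        proof
          fix w assume w: "w \<in> W"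
          have "C *\<^sub>v w \<in> carrier_vec 0" using C j by (intro carrier_vecI) simp
          hence "C *\<^sub>v w = 0\<^sub>v 0" using carrier_vec_0_eq by blast
          hence "w = B *\<^sub>v 0\<^sub>v 0" using iv w by metis
          thus "w \<in> {0\<^sub>v k}" using mat_vec_zero_k[of B k 0] B j by simp
        qed
        thus False using W0 Wc(2) by blast
      qed
      have j'0: "j' \<noteq> 0"
      proof
        assume j': "j' = 0"
        have "carrier_vec k \<subseteq> W"
        proof
          fix v :: "complex vec" assume v: "v \<in> carrier_vec k"
          have "C' *\<^sub>v (Q *\<^sub>v v) \<in> carrier_vec 0" using C' j' by (intro carrier_vecI) simp
          hence "C' *\<^sub>v (Q *\<^sub>v v) = 0\<^sub>v 0" using carrier_vec_0_eq by blast
          hence "Q *\<^sub>v v = 0\<^sub>v k" using F4[OF v] mat_vec_zero_k[of B' k 0] B' j' by simp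
          hence d: "v - E *\<^sub>v v = 0\<^sub>v k" using Qv[OF v] by simp
          have "v = E *\<^sub>v v"
          proof (rule eq_vecI)
            fix i assume "i < dim_vec (E *\<^sub>v v)"
            hence i: "i < k" using Ec by simp
            from d have "(v - E *\<^sub>v v) $ i = 0\<^sub>v k $ i" by simp
            thus "v $ i = (E *\<^sub>v v) $ i" using i v Ec by simp
          qed (use v Ec in simp)
          also have "\<dots> = B *\<^sub>v (C *\<^sub>v v)" using Ev[OF v] .
          also have "\<dots> \<in> W" using iii C v by simp
          finally show "v \<in> W" .
        qed
        thus False using W1 Wc(1) by blast
      qed
      have "(\<Sum>g\<in>carrier G. c g * mat_trace (R1 g)) = 0" using less.IH[of j R1] rep1 jk j'0 by simp
      moreover have "(\<Sum>g\<in>carrier G. c g * mat_trace (R2 g)) = 0" using less.IH[of j' R2] rep2 jk j0 by simp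
      ultimately show ?thesis using trR by (simp add: distrib_left sum.distrib)
    qed
  qed
qed


lemma smult_one_mat_vec: "(x :: complex vec) \<in> carrier_vec n \<Longrightarrow> (a \<cdot>\<^sub>m 1\<^sub>m n) *\<^sub>v x = a \<cdot>\<^sub>v x"
proof (rule eq_vecI)
  fix i assume x: "x \<in> carrier_vec n" and i: "i < dim_vec (a \<cdot>\<^sub>v x)"
  hence i': "i < n" by simp
  have "((a \<cdot>\<^sub>m 1\<^sub>m n) *\<^sub>v x) $ i = (\<Sum>j\<in>{0..<n}. a * (if i = j then 1 else 0) * x $ j)"
    using i' x by (simp add: scalar_prod_def row_def)
  also have "\<dots> = (\<Sum>j\<in>{0..<n}. (if i = j then a else 0) * x $ j)" by (intro sum.cong) auto
  also have "\<dots> = (\<Sum>j\<in>{0..<n}. if i = j then a * x $ j else 0)" by (intro sum.cong) auto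
  also have "\<dots> = a * x $ i" using i' by simp
  finally show "((a \<cdot>\<^sub>m 1\<^sub>m n) *\<^sub>v x) $ i = (a \<cdot>\<^sub>v x) $ i" using i' x by simp
qed simp

lemma schur:
  assumes irr: "irreducible_rep G n R" and T: "T \<in> carrier_mat n n"
    and comm: "\<And>g. g \<in> carrier G \<Longrightarrow> T * R g = R g * T"
  shows "\<exists>a. T = a \<cdot>\<^sub>m 1\<^sub>m n"
proof -
  have rep: "is_rep G n R" and n: "n > 0"
    and irrW: "\<And>W. invariant_subspace G n R W \<Longrightarrow> W = {0\<^sub>v n} \<or> W = carrier_vec n"
    using irr unfolding irreducible_rep_def by auto
  have Rc: "\<And>g. g \<in> carrier G \<Longrightarrow> R g \<in> carrier_mat n n" using rep unfolding is_rep_def by auto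
  obtain a where "eigenvalue T a" using spectrum_non_empty[OF T n] unfolding spectrum_def by auto
  then obtain v where v: "v \<in> carrier_vec n" "v \<noteq> 0\<^sub>v n" "T *\<^sub>v v = a \<cdot>\<^sub>v v"
    unfolding eigenvalue_def eigenvector_def using T by auto
  define W where "W = {w \<in> carrier_vec n. T *\<^sub>v w = a \<cdot>\<^sub>v w}"
  have "invariant_subspace G n R W" unfolding invariant_subspace_def
  proof (intro conjI ballI allI)
    show "W \<subseteq> carrier_vec n" unfolding W_def by auto
    show "0\<^sub>v n \<in> W" unfolding W_def using T by (auto simp: mat_vec_zero_k intro!: eq_vecI)
    fix w assume w: "w \<in> W"
    hence wc: "w \<in> carrier_vec n" and Tw: "T *\<^sub>v w = a \<cdot>\<^sub>v w" unfolding W_def by auto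
    {
      fix w' assume "w' \<in> W"
      hence wc': "w' \<in> carrier_vec n" and Tw': "T *\<^sub>v w' = a \<cdot>\<^sub>v w'" unfolding W_def by auto
      show "w + w' \<in> W" unfolding W_def using wc wc' Tw Tw' T
        by (simp add: mult_add_distrib_mat_vec[of _ n n] smult_add_distrib_vec)
    }
    fix c :: complex
    show "c \<cdot>\<^sub>v w \<in> W" unfolding W_def using wc Tw T by (simp add: mult_mat_vec[of _ n n] smult_smult_assoc mult.commute)
  next
    fix g w assume g: "g \<in> carrier G" and w: "w \<in> W"
    hence wc: "w \<in> carrier_vec n" and Tw: "T *\<^sub>v w = a \<cdot>\<^sub>v w" unfolding W_def by auto
    have "T *\<^sub>v (R g *\<^sub>v w) = (T * R g) *\<^sub>v w" using T Rc[OF g] wc by simp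
    also have "\<dots> = R g *\<^sub>v (T *\<^sub>v w)" unfolding comm[OF g] using T Rc[OF g] wc by simp
    also have "\<dots> = a \<cdot>\<^sub>v (R g *\<^sub>v w)" unfolding Tw using Rc[OF g] wc by (simp add: mult_mat_vec[of _ n n])
    finally show "R g *\<^sub>v w \<in> W" unfolding W_def using Rc[OF g] wc by simp
  qed
  hence "W = {0\<^sub>v n} \<or> W = carrier_vec n" by (rule irrW)
  moreover have "v \<in> W" unfolding W_def using v by simp
  ultimately have W: "W = carrier_vec n" using v by auto
  have "T = a \<cdot>\<^sub>m 1\<^sub>m n"
  proof (rule eq_mat_on_vec[OF T])
    fix x :: "complex vec" assume "x \<in> carrier_vec n"
    hence "x \<in> W" using W by simp
    thus "T *\<^sub>v x = (a \<cdot>\<^sub>m 1\<^sub>m n) *\<^sub>v x" unfolding W_def by (simp add: smult_one_mat_vec)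
  qed simp
  thus ?thesis by blast
qed

definition msum :: "nat \<Rightarrow> 'x set \<Rightarrow> ('x \<Rightarrow> complex mat) \<Rightarrow> complex mat" where
  "msum n S f = mat n n (\<lambda>(i,j). \<Sum>x\<in>S. f x $$ (i,j))"

lemma msum_carrier[simp]: "msum n S f \<in> carrier_mat n n" by (simp add: msum_def)

lemma msum_mult_left:
  assumes A: "A \<in> carrier_mat n n" and f: "\<And>x. x \<in> S \<Longrightarrow> f x \<in> carrier_mat n n"
  shows "A * msum n S f = msum n S (\<lambda>x. A * f x)"
proof (rule eq_matI)
  fix i j assume i: "i < dim_row (msum n S (\<lambda>x. A * f x))" and j: "j < dim_col (msum n S (\<lambda>x. A * f x))"
  hence i': "i < n" and j': "j < n" by (auto simp: msum_def)
  have "(A * msum n S f) $$ (i,j) = (\<Sum>l\<in>{0..<n}. A $$ (i,l) * (\<Sum>x\<in>S. f x $$ (l,j)))"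
    using i' j' A by (simp add: msum_def scalar_prod_def row_def col_def)
  also have "\<dots> = (\<Sum>x\<in>S. \<Sum>l\<in>{0..<n}. A $$ (i,l) * f x $$ (l,j))"
    by (simp add: sum_distrib_left) (rule sum.swap)
  also have "\<dots> = (\<Sum>x\<in>S. (A * f x) $$ (i,j))"
  proof (rule sum.cong[OF refl])
    fix x assume "x \<in> S"
    hence "f x \<in> carrier_mat n n" by (rule f)
    thus "(\<Sum>l\<in>{0..<n}. A $$ (i,l) * f x $$ (l,j)) = (A * f x) $$ (i,j)" using i' j' A by (simp add: scalar_prod_def row_def col_def)
  qed
  also have "\<dots> = msum n S (\<lambda>x. A * f x) $$ (i,j)" using i' j' by (simp add: msum_def)
  finally show "(A * msum n S f) $$ (i,j) = msum n S (\<lambda>x. A * f x) $$ (i,j)" .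
qed (use A in \<open>auto simp: msum_def\<close>)

lemma msum_mult_right:
  assumes A: "A \<in> carrier_mat n n" and f: "\<And>x. x \<in> S \<Longrightarrow> f x \<in> carrier_mat n n"
  shows "msum n S f * A = msum n S (\<lambda>x. f x * A)"
proof (rule eq_matI)
  fix i j assume i: "i < dim_row (msum n S (\<lambda>x. f x * A))" and j: "j < dim_col (msum n S (\<lambda>x. f x * A))"
  hence i': "i < n" and j': "j < n" by (auto simp: msum_def)
  have "(msum n S f * A) $$ (i,j) = (\<Sum>l\<in>{0..<n}. (\<Sum>x\<in>S. f x $$ (i,l)) * A $$ (l,j))"
    using i' j' A by (simp add: msum_def scalar_prod_def row_def col_def)
  also have "\<dots> = (\<Sum>x\<in>S. \<Sum>l\<in>{0..<n}. f x $$ (i,l) * A $$ (l,j))"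
    by (simp add: sum_distrib_right) (rule sum.swap)
  also have "\<dots> = (\<Sum>x\<in>S. (f x * A) $$ (i,j))"
  proof (rule sum.cong[OF refl])
    fix x assume "x \<in> S"
    hence "f x \<in> carrier_mat n n" by (rule f)
    thus "(\<Sum>l\<in>{0..<n}. f x $$ (i,l) * A $$ (l,j)) = (f x * A) $$ (i,j)" using i' j' A by (simp add: scalar_prod_def row_def col_def)
  qed
  also have "\<dots> = msum n S (\<lambda>x. f x * A) $$ (i,j)" using i' j' by (simp add: msum_def)
  finally show "(msum n S f * A) $$ (i,j) = msum n S (\<lambda>x. f x * A) $$ (i,j)" .
qed (use A in \<open>auto simp: msum_def\<close>)

lemma msum_reindex: assumes "bij_betw h S T" shows "msum n S (\<lambda>x. f (h x)) = msum n T f"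
  unfolding msum_def by (intro eq_matI) (auto intro: sum.reindex_bij_betw[OF assms])

lemma msum_cong: "(\<And>x. x \<in> S \<Longrightarrow> f x = g x) \<Longrightarrow> msum n S f = msum n S g"
  unfolding msum_def by (intro eq_matI) auto

lemma trace_msum:
  assumes f: "\<And>x. x \<in> S \<Longrightarrow> f x \<in> carrier_mat n n"
  shows "mat_trace (msum n S f) = (\<Sum>x\<in>S. mat_trace (f x))"
proof -
  have "mat_trace (msum n S f) = (\<Sum>i<n. \<Sum>x\<in>S. f x $$ (i,i))" by (simp add: mat_trace_def msum_def)
  also have "\<dots> = (\<Sum>x\<in>S. \<Sum>i<n. f x $$ (i,i))" by (rule sum.swap)
  also have "\<dots> = (\<Sum>x\<in>S. mat_trace (f x))" using f by (intro sum.cong) (auto simp: mat_trace_def)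
  finally show ?thesis .
qed

lemma msum_const_smult: "msum n S (\<lambda>x. 1\<^sub>m n) = of_nat (card S) \<cdot>\<^sub>m 1\<^sub>m n"
  unfolding msum_def by (intro eq_matI) auto


definition conjcl :: "('a, 'b) monoid_scheme \<Rightarrow> 'a \<Rightarrow> 'a set" where
  "conjcl G a = {inv\<^bsub>G\<^esub> x \<otimes>\<^bsub>G\<^esub> a \<otimes>\<^bsub>G\<^esub> x | x. x \<in> carrier G}"

context group begin

lemma mult_inv_cancel_left[simp]: "x \<in> carrier G \<Longrightarrow> a \<in> carrier G \<Longrightarrow> x \<otimes> (inv x \<otimes> a) = a"
  by (simp add: m_assoc[symmetric])
lemma inv_mult_cancel_left[simp]: "x \<in> carrier G \<Longrightarrow> a \<in> carrier G \<Longrightarrow> inv x \<otimes> (x \<otimes> a) = a"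
  by (simp add: m_assoc[symmetric])

lemma conj_inj: "g \<in> carrier G \<Longrightarrow> x \<in> carrier G \<Longrightarrow> y \<in> carrier G \<Longrightarrow> g \<otimes> x \<otimes> inv g = g \<otimes> y \<otimes> inv g \<Longrightarrow> x = y"
  by (metis inv_closed l_cancel m_closed r_cancel)

lemma conjcl_carrier: "a \<in> carrier G \<Longrightarrow> conjcl G a \<subseteq> carrier G"
  unfolding conjcl_def by auto

lemma conjcl_self: "a \<in> carrier G \<Longrightarrow> a \<in> conjcl G a"
  unfolding conjcl_def by (rule CollectI, rule exI[of _ \<one>]) auto

lemma conjcl_trans:
  assumes a: "a \<in> carrier G" and b: "b \<in> conjcl G a" and c: "c \<in> conjcl G b"
  shows "c \<in> conjcl G a"
proof -
  obtain x where x: "x \<in> carrier G" "b = inv x \<otimes> a \<otimes> x" using b unfolding conjcl_def by auto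
  obtain y where y: "y \<in> carrier G" "c = inv y \<otimes> b \<otimes> y" using c unfolding conjcl_def by auto
  have "c = inv (x \<otimes> y) \<otimes> a \<otimes> (x \<otimes> y)" using x y a by (simp add: inv_mult_group m_assoc)
  thus ?thesis unfolding conjcl_def using x y by blast
qed

lemma conjcl_sym:
  assumes a: "a \<in> carrier G" and b: "b \<in> conjcl G a"
  shows "a \<in> conjcl G b"
proof -
  obtain x where x: "x \<in> carrier G" "b = inv x \<otimes> a \<otimes> x" using b unfolding conjcl_def by auto
  have "a = inv (inv x) \<otimes> b \<otimes> inv x" using x a by (simp add: m_assoc)
  thus ?thesis unfolding conjcl_def using x by blast
qed

lemma bij_conj_conjcl:
  assumes a: "a \<in> carrier G" and g: "g \<in> carrier G"
  shows "bij_betw (\<lambda>y. g \<otimes> y \<otimes> inv g) (conjcl G a) (conjcl G a)"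
proof (rule bij_betw_imageI)
  show "inj_on (\<lambda>y. g \<otimes> y \<otimes> inv g) (conjcl G a)"
    using conjcl_carrier[OF a] g conj_inj by (intro inj_onI) blast
  show "(\<lambda>y. g \<otimes> y \<otimes> inv g) ` conjcl G a = conjcl G a"
  proof
    show "(\<lambda>y. g \<otimes> y \<otimes> inv g) ` conjcl G a \<subseteq> conjcl G a"
    proof
      fix z assume "z \<in> (\<lambda>y. g \<otimes> y \<otimes> inv g) ` conjcl G a"
      then obtain x where x: "x \<in> carrier G" "z = g \<otimes> (inv x \<otimes> a \<otimes> x) \<otimes> inv g" unfolding conjcl_def by auto
      have "z = inv (x \<otimes> inv g) \<otimes> a \<otimes> (x \<otimes> inv g)" using x a g by (simp add: inv_mult_group m_assoc)
      thus "z \<in> conjcl G a" unfolding conjcl_def using x g by blast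
    qed
    show "conjcl G a \<subseteq> (\<lambda>y. g \<otimes> y \<otimes> inv g) ` conjcl G a"
    proof
      fix z assume "z \<in> conjcl G a"
      then obtain x where x: "x \<in> carrier G" "z = inv x \<otimes> a \<otimes> x" unfolding conjcl_def by auto
      have "inv (x \<otimes> g) \<otimes> a \<otimes> (x \<otimes> g) \<in> conjcl G a" unfolding conjcl_def using x g by blast
      moreover have "z = g \<otimes> (inv (x \<otimes> g) \<otimes> a \<otimes> (x \<otimes> g)) \<otimes> inv g"
        using x a g by (simp add: inv_mult_group m_assoc)
      ultimately show "z \<in> (\<lambda>y. g \<otimes> y \<otimes> inv g) ` conjcl G a" by blast
    qed
  qed
qed

lemma bij_conj_normal:
  assumes M: "M \<lhd> G" and g: "g \<in> carrier G"
  shows "bij_betw (\<lambda>y. g \<otimes> y \<otimes> inv g) M M"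
proof -
  interpret normal M G by fact
  show ?thesis
  proof (rule bij_betw_imageI)
    show "inj_on (\<lambda>y. g \<otimes> y \<otimes> inv g) M"
      using subset g conj_inj by (intro inj_onI) blast
    show "(\<lambda>y. g \<otimes> y \<otimes> inv g) ` M = M"
    proof
      show "(\<lambda>y. g \<otimes> y \<otimes> inv g) ` M \<subseteq> M" using inv_op_closed2 g by auto
      show "M \<subseteq> (\<lambda>y. g \<otimes> y \<otimes> inv g) ` M"
      proof
        fix z assume z: "z \<in> M"
        have "inv g \<otimes> z \<otimes> g \<in> M" using inv_op_closed1 g z by auto
        moreover have "z = g \<otimes> (inv g \<otimes> z \<otimes> g) \<otimes> inv g" using z g subset by (auto simp: m_assoc)
        ultimately show "z \<in> (\<lambda>y. g \<otimes> y \<otimes> inv g) ` M" by blast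
      qed
    qed
  qed
qed

lemma bij_mult_subgroup:
  assumes M: "subgroup M G" and z: "z \<in> M"
  shows "bij_betw (\<lambda>y. z \<otimes> y) M M"
proof -
  interpret subgroup M G by fact
  show ?thesis
  proof (rule bij_betw_imageI)
    show "inj_on (\<lambda>y. z \<otimes> y) M" using subset z by (intro inj_onI) (auto dest: subsetD)
    show "(\<lambda>y. z \<otimes> y) ` M = M"
    proof
      show "(\<lambda>y. z \<otimes> y) ` M \<subseteq> M" using z by auto
      show "M \<subseteq> (\<lambda>y. z \<otimes> y) ` M"
      proof
        fix w assume w: "w \<in> M"
        have "inv z \<otimes> w \<in> M" using z w by auto
        moreover have "w = z \<otimes> (inv z \<otimes> w)" using z w subset by (auto simp: m_assoc[symmetric])
        ultimately show "w \<in> (\<lambda>y. z \<otimes> y) ` M" by blast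
      qed
    qed
  qed
qed

lemma bij_mult_right_carrier:
  assumes a: "a \<in> carrier G"
  shows "bij_betw (\<lambda>y. y \<otimes> a) (carrier G) (carrier G)"
proof (rule bij_betw_imageI)
  show "inj_on (\<lambda>y. y \<otimes> a) (carrier G)" using a by (intro inj_onI) auto
  show "(\<lambda>y. y \<otimes> a) ` carrier G = carrier G"
  proof
    show "(\<lambda>y. y \<otimes> a) ` carrier G \<subseteq> carrier G" using a by auto
    show "carrier G \<subseteq> (\<lambda>y. y \<otimes> a) ` carrier G"
    proof
      fix w assume w: "w \<in> carrier G"
      have "w = (w \<otimes> inv a) \<otimes> a" using w a by (simp add: m_assoc)
      thus "w \<in> (\<lambda>y. y \<otimes> a) ` carrier G" using w a by blast
    qed
  qed
qed

lemma rep_inv: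
  assumes rep: "is_rep G n R" and x: "x \<in> carrier G"
  shows "R x * R (inv x) = 1\<^sub>m n" "R (inv x) * R x = 1\<^sub>m n"
proof -
  have Rm: "\<And>g h. g \<in> carrier G \<Longrightarrow> h \<in> carrier G \<Longrightarrow> R (g \<otimes> h) = R g * R h"
    and R1: "R \<one> = 1\<^sub>m n" using rep unfolding is_rep_def by auto
  show "R x * R (inv x) = 1\<^sub>m n" using Rm[of x "inv x"] x R1 by simp
  show "R (inv x) * R x = 1\<^sub>m n" using Rm[of "inv x" x] x R1 by simp
qed

lemma trace_conj:
  assumes rep: "is_rep G n R" and a: "a \<in> carrier G" and x: "x \<in> carrier G"
  shows "mat_trace (R (inv x \<otimes> a \<otimes> x)) = mat_trace (R a)"
proof -
  have Rc: "\<And>g. g \<in> carrier G \<Longrightarrow> R g \<in> carrier_mat n n"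
    and Rm: "\<And>g h. g \<in> carrier G \<Longrightarrow> h \<in> carrier G \<Longrightarrow> R (g \<otimes> h) = R g * R h"
    using rep unfolding is_rep_def by auto
  have "R (inv x \<otimes> a \<otimes> x) = R (inv x) * (R a * R x)"
    using Rm a x assoc_mult_mat[OF Rc Rc Rc, of "inv x" a x] by simp
  hence "mat_trace (R (inv x \<otimes> a \<otimes> x)) = mat_trace ((R a * R x) * R (inv x))"
    using trace_comm[of "R (inv x)" n n "R a * R x"] Rc a x mult_carrier_mat[OF Rc[OF a] Rc[OF x]] by simp
  also have "\<dots> = mat_trace (R a * (R x * R (inv x)))" using assoc_mult_mat[OF Rc Rc Rc, of a x "inv x"] a x by simp
  also have "\<dots> = mat_trace (R a)" using rep_inv[OF rep x] right_mult_one_mat[OF Rc[OF a]] by simp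
  finally show ?thesis .
qed

end


context group begin

lemma regular_rep:
  assumes fin: "finite (carrier G)"
  shows "\<exists>m Rr. is_rep G m Rr \<and> m > 0 \<and> (\<forall>g\<in>carrier G. mat_trace (Rr g) = (if g = \<one> then of_nat m else 0))"
proof -
  define m where "m = card (carrier G)"
  obtain e where e: "bij_betw e {0..<m} (carrier G)" using ex_bij_betw_nat_finite[OF fin] m_def by blast
  have ec: "\<And>i. i < m \<Longrightarrow> e i \<in> carrier G" using e by (auto dest: bij_betwE)
  have einj: "\<And>i j. i < m \<Longrightarrow> j < m \<Longrightarrow> e i = e j \<Longrightarrow> i = j"
    using e unfolding bij_betw_def inj_on_def by auto
  have reidx: "(\<Sum>l\<in>{0..<m}. F (e l)) = (\<Sum>y\<in>carrier G. F y)" for F :: "'a \<Rightarrow> complex"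
    by (rule sum.reindex_bij_betw[OF e])
  define Rr where "Rr = (\<lambda>g. mat m m (\<lambda>(i,j). if e i = g \<otimes> e j then 1 else (0::complex)))"
  have m0: "m > 0" unfolding m_def using fin by (simp add: card_gt_0_iff) blast
  have rep: "is_rep G m Rr" unfolding is_rep_def
  proof (intro conjI ballI)
    fix g assume "g \<in> carrier G" thus "Rr g \<in> carrier_mat m m" unfolding Rr_def by simp
  next
    fix g h assume g: "g \<in> carrier G" and h: "h \<in> carrier G"
    show "Rr (g \<otimes> h) = Rr g * Rr h"
    proof (rule eq_matI)
      fix i j assume i: "i < dim_row (Rr g * Rr h)" and j: "j < dim_col (Rr g * Rr h)"
      hence i': "i < m" and j': "j < m" unfolding Rr_def by auto
      have "(Rr g * Rr h) $$ (i,j) = (\<Sum>l\<in>{0..<m}. (if e i = g \<otimes> e l then 1 else 0) * (if e l = h \<otimes> e j then 1 else (0::complex)))"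
        using i' j' unfolding Rr_def by (simp add: scalar_prod_def row_def col_def)
      also have "\<dots> = (\<Sum>y\<in>carrier G. (if e i = g \<otimes> y then 1 else 0) * (if y = h \<otimes> e j then 1 else (0::complex)))"
        by (rule reidx)
      also have "\<dots> = (\<Sum>y\<in>carrier G. if y = h \<otimes> e j then (if e i = g \<otimes> y then 1 else 0) else (0::complex))"
        by (intro sum.cong) auto
      also have "\<dots> = (if e i = g \<otimes> (h \<otimes> e j) then 1 else 0)"
        using h ec[OF j'] fin by (simp add: sum.delta)
      also have "\<dots> = Rr (g \<otimes> h) $$ (i,j)" unfolding Rr_def using i' j' g h ec[OF j'] by (simp add: m_assoc)
      finally show "Rr (g \<otimes> h) $$ (i,j) = (Rr g * Rr h) $$ (i,j)" by simp
    qed (auto simp: Rr_def)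
  next
    show "Rr \<one> = 1\<^sub>m m"
      unfolding Rr_def by (intro eq_matI) (auto dest: einj simp: ec)
  qed
  have tr: "mat_trace (Rr g) = (if g = \<one> then of_nat m else 0)" if g: "g \<in> carrier G" for g
  proof -
    have "mat_trace (Rr g) = (\<Sum>l\<in>{0..<m}. if e l = g \<otimes> e l then 1 else (0::complex))"
      unfolding Rr_def mat_trace_def by (simp add: atLeast0LessThan)
    also have "\<dots> = (\<Sum>y\<in>carrier G. if y = g \<otimes> y then 1 else (0::complex))" by (rule reidx)
    also have "\<dots> = (if g = \<one> then of_nat m else 0)"
    proof (cases "g = \<one>")
      case True thus ?thesis by (simp add: m_def)
    next
      case False
      have "y \<noteq> g \<otimes> y" if "y \<in> carrier G" for y
      proof
        assume "y = g \<otimes> y"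
        hence "\<one> \<otimes> y = g \<otimes> y" using that by simp
        hence "\<one> = g" using that g r_cancel by blast
        thus False using False by simp
      qed
      thus ?thesis using False by simp
    qed
    finally show ?thesis .
  qed
  show ?thesis using rep m0 tr by blast
qed

lemma msum_conj_commute:
  assumes rep: "is_rep G n R" and S: "S \<subseteq> carrier G" and g: "g \<in> carrier G"
    and bij: "bij_betw (\<lambda>y. g \<otimes> y \<otimes> inv g) S S"
  shows "msum n S R * R g = R g * msum n S R"
proof -
  have Rc: "\<And>g. g \<in> carrier G \<Longrightarrow> R g \<in> carrier_mat n n"
    and Rm: "\<And>g h. g \<in> carrier G \<Longrightarrow> h \<in> carrier G \<Longrightarrow> R (g \<otimes> h) = R g * R h"
    using rep unfolding is_rep_def by auto
  have RS: "\<And>x. x \<in> S \<Longrightarrow> R x \<in> carrier_mat n n" using S Rc by auto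
  have "msum n S R * R g = msum n S (\<lambda>y. R y * R g)"
    using msum_mult_right[of "R g" n S R] Rc[OF g] RS by simp
  also have "\<dots> = msum n S (\<lambda>y. R (y \<otimes> g))" using S g Rm by (intro msum_cong) auto
  also have "\<dots> = msum n S (\<lambda>y. R ((g \<otimes> y \<otimes> inv g) \<otimes> g))"
    by (rule msum_reindex[OF bij, symmetric])
  also have "\<dots> = msum n S (\<lambda>y. R g * R y)"
  proof (rule msum_cong)
    fix y assume "y \<in> S"
    hence y: "y \<in> carrier G" using S by auto
    have "g \<otimes> y \<otimes> inv g \<otimes> g = g \<otimes> y" using y g by (simp add: m_assoc)
    thus "R (g \<otimes> y \<otimes> inv g \<otimes> g) = R g * R y" using Rm y g by simp
  qed
  also have "\<dots> = R g * msum n S R"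
    using msum_mult_left[of "R g" n S R] Rc[OF g] RS by simp
  finally show ?thesis .
qed

lemma class_sum_scalar:
  assumes irr: "irreducible_rep G n R" and a: "a \<in> carrier G"
  shows "\<exists>l. msum n (conjcl G a) R = l \<cdot>\<^sub>m 1\<^sub>m n \<and> l * of_nat n = of_nat (card (conjcl G a)) * mat_trace (R a)"
proof -
  have rep: "is_rep G n R" using irr unfolding irreducible_rep_def by auto
  have Rc: "\<And>g. g \<in> carrier G \<Longrightarrow> R g \<in> carrier_mat n n" using rep unfolding is_rep_def by auto
  obtain l where l: "msum n (conjcl G a) R = l \<cdot>\<^sub>m 1\<^sub>m n"
    using schur[OF irr msum_carrier] msum_conj_commute[OF rep conjcl_carrier[OF a] _ bij_conj_conjcl[OF a]] by blast
  have "l * of_nat n = mat_trace (msum n (conjcl G a) R)" unfolding l by (simp add: trace_smult[of _ n] trace_one)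
  also have "\<dots> = (\<Sum>y\<in>conjcl G a. mat_trace (R y))"
    using trace_msum[of "conjcl G a" R n] Rc conjcl_carrier[OF a] by blast
  also have "\<dots> = (\<Sum>y\<in>conjcl G a. mat_trace (R a))"
  proof (rule sum.cong[OF refl])
    fix y assume "y \<in> conjcl G a"
    then obtain x where "x \<in> carrier G" "y = inv x \<otimes> a \<otimes> x" unfolding conjcl_def by auto
    thus "mat_trace (R y) = mat_trace (R a)" using trace_conj[OF rep a] by simp
  qed
  also have "\<dots> = of_nat (card (conjcl G a)) * mat_trace (R a)" by simp
  finally show ?thesis using l by blast
qed

end


lemma sum_indicator_subset:
  "finite S \<Longrightarrow> A \<subseteq> S \<Longrightarrow> (\<Sum>g\<in>S. (if g \<in> A then t g else (0::complex))) = (\<Sum>g\<in>A. t g)"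
  by (simp add: sum.inter_restrict[symmetric] Int_absorb1)

context group begin

lemma class_sum_trace:
  assumes irr: "irreducible_rep G n R" and a: "a \<in> carrier G" and k: "k \<in> carrier G"
  obtains l where "(\<Sum>g\<in>conjcl G a. mat_trace (R g * R k)) = l * mat_trace (R k)"
    and "l * of_nat n = of_nat (card (conjcl G a)) * mat_trace (R a)"
proof -
  have rep: "is_rep G n R" using irr unfolding irreducible_rep_def by auto
  have Rc: "\<And>g. g \<in> carrier G \<Longrightarrow> R g \<in> carrier_mat n n" using rep unfolding is_rep_def by auto
  have RS: "\<And>x. x \<in> conjcl G a \<Longrightarrow> R x \<in> carrier_mat n n" using conjcl_carrier[OF a] Rc by auto
  obtain l where l: "msum n (conjcl G a) R = l \<cdot>\<^sub>m 1\<^sub>m n"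
    and l2: "l * of_nat n = of_nat (card (conjcl G a)) * mat_trace (R a)"
    using class_sum_scalar[OF irr a] by blast
  have RSk: "\<And>x. x \<in> conjcl G a \<Longrightarrow> R x * R k \<in> carrier_mat n n" using RS Rc[OF k] by (metis mult_carrier_mat)
  have "(\<Sum>g\<in>conjcl G a. mat_trace (R g * R k)) = mat_trace (msum n (conjcl G a) (\<lambda>g. R g * R k))"
    using trace_msum[of "conjcl G a" "\<lambda>g. R g * R k" n, OF RSk] by simp
  also have "\<dots> = mat_trace (msum n (conjcl G a) R * R k)"
    using msum_mult_right[of "R k" n "conjcl G a" R] Rc[OF k] RS by simp
  also have "\<dots> = l * mat_trace (R k)" unfolding l using Rc[OF k]
    by (simp add: mult_smult_assoc_mat[of _ n n] trace_smult[of _ n])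
  finally show ?thesis using that l2 by blast
qed

lemma irr_separates:
  assumes fin: "finite (carrier G)" and a: "a \<in> carrier G" and b: "b \<in> carrier G"
    and eq: "\<And>n R. irreducible_rep G n R \<Longrightarrow> mat_trace (R a) = mat_trace (R b)"
  shows "b \<in> conjcl G a"
proof (rule ccontr)
  assume nb: "b \<notin> conjcl G a"
  define A where "A = conjcl G a"
  define Bc where "Bc = conjcl G b"
  have AG: "A \<subseteq> carrier G" and BG: "Bc \<subseteq> carrier G" unfolding A_def Bc_def using conjcl_carrier a b by auto
  have disj: "y \<notin> Bc" if "y \<in> A" for y
  proof
    assume "y \<in> Bc"
    hence "b \<in> conjcl G y" unfolding Bc_def using conjcl_sym b by blast
    hence "b \<in> conjcl G a" using conjcl_trans[OF a] that unfolding A_def by blast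
    thus False using nb by simp
  qed
  define x where "x = (\<lambda>g. of_nat (card Bc) * (if g \<in> A then 1 else 0) - of_nat (card A) * (if g \<in> Bc then 1 else (0::complex)))"
  define c where "c = (\<lambda>u. x (u \<otimes> a))"
  have H: "(\<Sum>u\<in>carrier G. c u * mat_trace (R u)) = 0" if irr: "irreducible_rep G n R" for n R
  proof -
    have rep: "is_rep G n R" and n0: "n > 0" using irr unfolding irreducible_rep_def by auto
    have Rc: "\<And>g. g \<in> carrier G \<Longrightarrow> R g \<in> carrier_mat n n"
      and Rm: "\<And>g h. g \<in> carrier G \<Longrightarrow> h \<in> carrier G \<Longrightarrow> R (g \<otimes> h) = R g * R h"
      using rep unfolding is_rep_def by auto
    define t where "t = (\<lambda>g. mat_trace (R g * R (inv a)))"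
    obtain la where la1: "(\<Sum>g\<in>A. t g) = la * mat_trace (R (inv a))"
      and la2: "la * of_nat n = of_nat (card A) * mat_trace (R a)"
      using class_sum_trace[OF irr a inv_closed[OF a]] unfolding A_def t_def by blast
    obtain lb where lb1: "(\<Sum>g\<in>Bc. t g) = lb * mat_trace (R (inv a))"
      and lb2: "lb * of_nat n = of_nat (card Bc) * mat_trace (R b)"
      using class_sum_trace[OF irr b inv_closed[OF a]] unfolding Bc_def t_def by blast
    have "(\<Sum>u\<in>carrier G. c u * mat_trace (R u)) = (\<Sum>g\<in>carrier G. c (g \<otimes> inv a) * mat_trace (R (g \<otimes> inv a)))"
      by (rule sum.reindex_bij_betw[OF bij_mult_right_carrier[OF inv_closed[OF a]], symmetric])
    also have "\<dots> = (\<Sum>g\<in>carrier G. x g * t g)"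
      unfolding c_def t_def using a Rm by (intro sum.cong) (auto simp: m_assoc)
    also have "\<dots> = (\<Sum>g\<in>carrier G. (if g \<in> A then of_nat (card Bc) * t g else 0) - (if g \<in> Bc then of_nat (card A) * t g else 0))"
      by (intro sum.cong) (auto simp: x_def left_diff_distrib)
    also have "\<dots> = (\<Sum>g\<in>carrier G. (if g \<in> A then of_nat (card Bc) * t g else 0)) - (\<Sum>g\<in>carrier G. (if g \<in> Bc then of_nat (card A) * t g else 0))"
      by (simp add: sum_subtractf)
    also have "\<dots> = of_nat (card Bc) * (\<Sum>g\<in>A. t g) - of_nat (card A) * (\<Sum>g\<in>Bc. t g)"
      using sum_indicator_subset[OF fin AG, of "\<lambda>g. of_nat (card Bc) * t g"]
        sum_indicator_subset[OF fin BG, of "\<lambda>g. of_nat (card A) * t g"] by (simp add: sum_distrib_left)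
    also have "\<dots> = of_nat (card Bc) * (la * mat_trace (R (inv a))) - of_nat (card A) * (lb * mat_trace (R (inv a)))"
      using la1 lb1 by simp
    finally have S: "(\<Sum>u\<in>carrier G. c u * mat_trace (R u)) =
       of_nat (card Bc) * (la * mat_trace (R (inv a))) - of_nat (card A) * (lb * mat_trace (R (inv a)))" .
    have "of_nat n * (of_nat (card Bc) * (la * mat_trace (R (inv a))) - of_nat (card A) * (lb * mat_trace (R (inv a))))
        = mat_trace (R (inv a)) * (of_nat (card Bc) * (la * of_nat n) - of_nat (card A) * (lb * of_nat n))"
      by (simp add: algebra_simps)
    also have "\<dots> = 0" unfolding la2 lb2 eq[OF irr] by (simp add: algebra_simps)
    finally show ?thesis unfolding S using n0 by simp
  qed
  obtain m Rr where rep: "is_rep G m Rr" and m0: "m > 0"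
    and tr: "\<forall>g\<in>carrier G. mat_trace (Rr g) = (if g = \<one> then of_nat m else 0)"
    using regular_rep[OF fin] by blast
  have "0 = (\<Sum>u\<in>carrier G. c u * mat_trace (Rr u))"
    using char_decomp[of G c, OF H rep] by simp
  also have "\<dots> = (\<Sum>u\<in>carrier G. if u = \<one> then c u * of_nat m else 0)"
    using tr by (intro sum.cong) auto
  also have "\<dots> = c \<one> * of_nat m" using fin by (simp add: sum.delta')
  also have "c \<one> = of_nat (card Bc)"
    unfolding c_def x_def using a conjcl_self[OF a] disj[of a] unfolding A_def by simp
  finally have "of_nat (card Bc) * of_nat m = (0::complex)" by simp
  moreover have "card Bc > 0" unfolding Bc_def using conjcl_self[OF b] finite_subset[OF BG fin]
    unfolding Bc_def by (auto simp: card_gt_0_iff)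
  ultimately show False using m0 by simp
qed

lemma normal_dichotomy:
  assumes irr: "irreducible_rep G n R" and M: "M \<lhd> G"
  shows "(\<forall>z\<in>M. R z = 1\<^sub>m n) \<or> msum n M R = 0\<^sub>m n n"
proof -
  interpret normal M G by fact
  have rep: "is_rep G n R" using irr unfolding irreducible_rep_def by auto
  have Rc: "\<And>g. g \<in> carrier G \<Longrightarrow> R g \<in> carrier_mat n n"
    and Rm: "\<And>g h. g \<in> carrier G \<Longrightarrow> h \<in> carrier G \<Longrightarrow> R (g \<otimes> h) = R g * R h"
    using rep unfolding is_rep_def by auto
  have RS: "\<And>x. x \<in> M \<Longrightarrow> R x \<in> carrier_mat n n" using subset Rc by auto
  obtain l where l: "msum n M R = l \<cdot>\<^sub>m 1\<^sub>m n"
    using schur[OF irr msum_carrier] msum_conj_commute[OF rep subset _ bij_conj_normal[OF M]] by blast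
  show ?thesis
  proof (cases "l = 0")
    case True
    hence "msum n M R = 0\<^sub>m n n" unfolding l by (intro eq_matI) auto
    thus ?thesis by simp
  next
    case False
    have "R z = 1\<^sub>m n" if z: "z \<in> M" for z
    proof -
      have "R z * msum n M R = msum n M (\<lambda>y. R z * R y)"
        using msum_mult_left[of "R z" n M R] RS z by simp
      also have "\<dots> = msum n M (\<lambda>y. R (z \<otimes> y))" using Rm z subset by (intro msum_cong) auto
      also have "\<dots> = msum n M R" by (rule msum_reindex[OF bij_mult_subgroup[OF subgroup_axioms z]])
      finally have "R z * (l \<cdot>\<^sub>m 1\<^sub>m n) = l \<cdot>\<^sub>m 1\<^sub>m n" unfolding l .
      hence e: "l \<cdot>\<^sub>m R z = l \<cdot>\<^sub>m 1\<^sub>m n"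
        using mult_smult_distrib[of "R z" n n "1\<^sub>m n" n l] RS[OF z] right_mult_one_mat[OF RS[OF z]] by simp
      show ?thesis
      proof (rule eq_matI)
        fix i j assume i: "i < dim_row (1\<^sub>m n :: complex mat)" and j: "j < dim_col (1\<^sub>m n :: complex mat)"
        have "(l \<cdot>\<^sub>m R z) $$ (i,j) = (l \<cdot>\<^sub>m 1\<^sub>m n) $$ (i,j)" using e by simp
        thus "R z $$ (i,j) = 1\<^sub>m n $$ (i,j)" using i j RS[OF z] False by simp
      qed (use RS[OF z] in auto)
    qed
    thus ?thesis by blast
  qed
qed

lemma ker_char:
  assumes irr: "irreducible_rep G n R" and M: "M \<lhd> G" and fin: "finite (carrier G)"
  shows "M \<subseteq> char_ker G (\<lambda>g. if g \<in> carrier G then mat_trace (R g) else 0) \<longleftrightarrow> (\<forall>z\<in>M. R z = 1\<^sub>m n)"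
proof -
  interpret normal M G by fact
  have rep: "is_rep G n R" and n0: "n > 0" using irr unfolding irreducible_rep_def by auto
  have Rc: "\<And>g. g \<in> carrier G \<Longrightarrow> R g \<in> carrier_mat n n"
    and R1: "R \<one> = 1\<^sub>m n" using rep unfolding is_rep_def by auto
  show ?thesis
  proof
    assume ker: "M \<subseteq> char_ker G (\<lambda>g. if g \<in> carrier G then mat_trace (R g) else 0)"
    show "\<forall>z\<in>M. R z = 1\<^sub>m n"
    proof (rule ccontr)
      assume "\<not> (\<forall>z\<in>M. R z = 1\<^sub>m n)"
      hence P: "msum n M R = 0\<^sub>m n n" using normal_dichotomy[OF irr M] by blast
      have "(0::complex) = mat_trace (msum n M R)" unfolding P by (simp add: mat_trace_def)
      also have "\<dots> = (\<Sum>z\<in>M. mat_trace (R z))" using trace_msum[of M R n] Rc subset by blast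
      also have "\<dots> = (\<Sum>z\<in>M. of_nat n)"
      proof (rule sum.cong[OF refl])
        fix z assume "z \<in> M"
        hence "z \<in> char_ker G (\<lambda>g. if g \<in> carrier G then mat_trace (R g) else 0)" "z \<in> carrier G"
          using ker subset by auto
        thus "mat_trace (R z) = of_nat n" unfolding char_ker_def R1 by (simp add: trace_one)
      qed
      also have "\<dots> = of_nat (card M) * of_nat n" by simp
      finally have "of_nat (card M) * of_nat n = (0::complex)" by simp
      moreover have "card M > 0"
      proof -
        have o: "\<one> \<in> M" using M normal_imp_subgroup subgroup.one_closed by blast
        have f: "finite M" using finite_subset[OF subset fin] .
        show ?thesis using o f card_gt_0_iff by blast
      qed
      ultimately show False using n0 by simp
    qed
  next
    assume "\<forall>z\<in>M. R z = 1\<^sub>m n"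
    thus "M \<subseteq> char_ker G (\<lambda>g. if g \<in> carrier G then mat_trace (R g) else 0)"
      unfolding char_ker_def using subset R1 by auto
  qed
qed

end


context group begin

lemma rcos_eq_iff:
  assumes M: "subgroup M G" and a: "a \<in> carrier G" and b: "b \<in> carrier G"
  shows "M #> a = M #> b \<longleftrightarrow> a \<otimes> inv b \<in> M"
proof
  assume "M #> a = M #> b"
  hence "a \<in> M #> b" using rcos_self[OF a M] by simp
  thus "a \<otimes> inv b \<in> M" using subgroup.rcos_module_imp[OF M is_group b] by blast
next
  assume "a \<otimes> inv b \<in> M"
  hence "a \<in> M #> b" using subgroup.rcos_module_rev[OF M is_group b a] by blast
  thus "M #> a = M #> b" using repr_independence[OF _ b M] by simp
qed

lemma lcos_mem_iff:
  assumes M: "subgroup M G" and g: "g \<in> carrier G" and y: "y \<in> carrier G"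
  shows "y \<in> g <# M \<longleftrightarrow> inv g \<otimes> y \<in> M"
proof
  assume "y \<in> g <# M"
  then obtain h where h: "h \<in> M" "y = g \<otimes> h" unfolding l_coset_def by auto
  have "h \<in> carrier G" using h M subgroup.subset by blast
  thus "inv g \<otimes> y \<in> M" using h g by simp
next
  assume "inv g \<otimes> y \<in> M"
  moreover have "y = g \<otimes> (inv g \<otimes> y)" using g y by simp
  ultimately show "y \<in> g <# M" unfolding l_coset_def by blast
qed

lemma conj_comm_normal:
  assumes M: "M \<lhd> G" and g: "g \<in> carrier G" and x: "x \<in> carrier G"
  shows "x \<otimes> g \<otimes> inv (g \<otimes> x) \<in> M \<longleftrightarrow> inv g \<otimes> (inv x \<otimes> g \<otimes> x) \<in> M"
proof -
  interpret normal M G by fact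
  define u where "u = inv g \<otimes> (inv x \<otimes> g \<otimes> x)"
  define w where "w = x \<otimes> g \<otimes> inv (g \<otimes> x)"
  have uc: "u \<in> carrier G" and wc: "w \<in> carrier G" unfolding u_def w_def using g x by auto
  have w_u: "w = g \<otimes> (x \<otimes> inv u \<otimes> inv x) \<otimes> inv g"
    unfolding u_def w_def using g x by (simp add: inv_mult_group m_assoc)
  have u_w: "u = inv (inv x \<otimes> (inv g \<otimes> w \<otimes> g) \<otimes> x)"
    unfolding u_def w_def using g x by (simp add: inv_mult_group m_assoc)
  show ?thesis unfolding u_def[symmetric] w_def[symmetric]
  proof
    assume "w \<in> M"
    hence "inv x \<otimes> (inv g \<otimes> w \<otimes> g) \<otimes> x \<in> M" using inv_op_closed1 g x by simp
    thus "u \<in> M" unfolding u_w by simp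
  next
    assume "u \<in> M"
    hence "x \<otimes> inv u \<otimes> inv x \<in> M" using inv_op_closed2 x by simp
    hence "g \<otimes> (x \<otimes> inv u \<otimes> inv x) \<otimes> inv g \<in> M" using inv_op_closed2 g by blast
    thus "w \<in> M" unfolding w_u .
  qed
qed

end


context group begin

lemma H_quot_count:
  assumes fin: "finite (carrier G)" and M: "M \<lhd> G" and g: "g \<in> carrier G"
  shows "card {y \<in> carrier G. inv y \<otimes> g \<otimes> y \<in> g <# M} = card M * card (centralizer_of (G Mod M) (M #> g))"
proof -
  interpret normal M G by fact
  have Msub: "subgroup M G" using M normal_imp_subgroup by blast
  define H where "H = {y \<in> carrier G. inv y \<otimes> g \<otimes> y \<in> g <# M}"
  define Cb where "Cb = centralizer_of (G Mod M) (M #> g)"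
  have Cb_def': "Cb = {Y \<in> rcosets M. Y <#> (M #> g) = (M #> g) <#> Y}"
    unfolding Cb_def centralizer_of_def by (simp add: FactGroup_def)
  have key: "M #> x \<in> Cb \<longleftrightarrow> x \<in> H" if x: "x \<in> carrier G" for x
  proof -
    have "M #> x \<in> rcosets M" using x by (rule rcosetsI[OF subset])
    hence "M #> x \<in> Cb \<longleftrightarrow> M #> (x \<otimes> g) = M #> (g \<otimes> x)"
      unfolding Cb_def' using rcos_sum[OF x g] rcos_sum[OF g x] by simp
    also have "\<dots> \<longleftrightarrow> x \<otimes> g \<otimes> inv (g \<otimes> x) \<in> M" using rcos_eq_iff[OF Msub] x g by simp
    also have "\<dots> \<longleftrightarrow> inv g \<otimes> (inv x \<otimes> g \<otimes> x) \<in> M" using conj_comm_normal[OF M g x] .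
    also have "\<dots> \<longleftrightarrow> inv x \<otimes> g \<otimes> x \<in> g <# M" using lcos_mem_iff[OF Msub g] x g by simp
    also have "\<dots> \<longleftrightarrow> x \<in> H" unfolding H_def using x by simp
    finally show ?thesis .
  qed
  have HU: "H = \<Union>Cb"
  proof
    show "H \<subseteq> \<Union>Cb"
    proof
      fix y assume y: "y \<in> H"
      hence yc: "y \<in> carrier G" unfolding H_def by simp
      have "y \<in> M #> y" by (rule rcos_self[OF yc Msub])
      moreover have "M #> y \<in> Cb" using key[OF yc] y by simp
      ultimately show "y \<in> \<Union>Cb" by blast
    qed
    show "\<Union>Cb \<subseteq> H"
    proof
      fix y assume "y \<in> \<Union>Cb"
      then obtain Y where Y: "Y \<in> Cb" "y \<in> Y" by blast
      then obtain x where x: "x \<in> carrier G" "Y = M #> x" unfolding Cb_def' RCOSETS_def by blast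
      have yc: "y \<in> carrier G" using Y x r_coset_subset_G[OF subset x(1)] by blast
      have "M #> x = M #> y" using repr_independence[OF _ x(1) Msub] Y x by simp
      hence "M #> y \<in> Cb" using Y x by simp
      thus "y \<in> H" using key[OF yc] by simp
    qed
  qed
  have CbR: "Cb \<subseteq> rcosets M" unfolding Cb_def' by auto
  have finCb: "finite Cb"
  proof -
    have "rcosets M \<subseteq> Pow (carrier G)" using rcosets_part_G[OF Msub] by auto
    thus ?thesis using CbR fin by (meson finite_Pow_iff finite_subset)
  qed
  have finH: "finite H" unfolding H_def using fin by simp
  have "card M * card Cb = card (\<Union>Cb)"
  proof (rule card_partition)
    show "finite Cb" by (rule finCb)
    show "finite (\<Union>Cb)" using finH HU by simp
    show "\<And>c. c \<in> Cb \<Longrightarrow> card c = card M" using card_rcosets_equal[OF _ subset] CbR by (metis subsetD)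
    show "\<And>c1 c2. c1 \<in> Cb \<Longrightarrow> c2 \<in> Cb \<Longrightarrow> c1 \<noteq> c2 \<Longrightarrow> c1 \<inter> c2 = {}"
      using rcos_disjoint[OF Msub] CbR unfolding pairwise_def disjnt_def by blast
  qed
  thus ?thesis unfolding H_def[symmetric] Cb_def[symmetric] HU by simp
qed

lemma H_fiber_count:
  assumes fin: "finite (carrier G)" and g: "g \<in> carrier G"
  shows "card {y \<in> carrier G. inv y \<otimes> g \<otimes> y \<in> g <# M}
       = card ((\<lambda>y. inv y \<otimes> g \<otimes> y) ` {y \<in> carrier G. inv y \<otimes> g \<otimes> y \<in> g <# M}) * card (centralizer_of G g)"
proof -
  define H where "H = {y \<in> carrier G. inv y \<otimes> g \<otimes> y \<in> g <# M}"
  define \<psi> where "\<psi> = (\<lambda>y. inv y \<otimes> g \<otimes> y)"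
  define C where "C = centralizer_of G g"
  have C_def': "C = {x \<in> carrier G. x \<otimes> g = g \<otimes> x}" unfolding C_def centralizer_of_def by simp
  define A where "A = (\<lambda>v. {y \<in> H. \<psi> y = v})"
  have finH: "finite H" unfolding H_def using fin by simp
  have finC: "finite C" unfolding C_def' using fin by simp
  have fib: "A (\<psi> y0) = (\<lambda>c. c \<otimes> y0) ` C" if y0: "y0 \<in> H" for y0
  proof
    have y0c: "y0 \<in> carrier G" using y0 unfolding H_def by simp
    show "A (\<psi> y0) \<subseteq> (\<lambda>c. c \<otimes> y0) ` C"
    proof
      fix y assume "y \<in> A (\<psi> y0)"
      hence y: "y \<in> H" and E: "inv y \<otimes> g \<otimes> y = inv y0 \<otimes> g \<otimes> y0" unfolding A_def \<psi>_def by auto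
      have yc: "y \<in> carrier G" using y unfolding H_def by simp
      define c where "c = y \<otimes> inv y0"
      have cc: "c \<in> carrier G" unfolding c_def using yc y0c by simp
      have "y \<otimes> (inv y \<otimes> g \<otimes> y) \<otimes> inv y0 = y \<otimes> (inv y0 \<otimes> g \<otimes> y0) \<otimes> inv y0" using E by simp
      hence "g \<otimes> (y \<otimes> inv y0) = y \<otimes> (inv y0 \<otimes> g)" using yc y0c g by (simp add: m_assoc)
      hence "c \<otimes> g = g \<otimes> c" unfolding c_def using yc y0c g by (simp add: m_assoc)
      hence "c \<in> C" unfolding C_def' using cc by simp
      moreover have "y = c \<otimes> y0" unfolding c_def using yc y0c by (simp add: m_assoc)
      ultimately show "y \<in> (\<lambda>c. c \<otimes> y0) ` C" by blast
    qed
    show "(\<lambda>c. c \<otimes> y0) ` C \<subseteq> A (\<psi> y0)"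
    proof
      fix y assume "y \<in> (\<lambda>c. c \<otimes> y0) ` C"
      then obtain c where c: "c \<in> C" "y = c \<otimes> y0" by blast
      have cc: "c \<in> carrier G" and comm: "c \<otimes> g = g \<otimes> c" using c unfolding C_def' by auto
      have yc: "y \<in> carrier G" using c cc y0c by simp
      have "g \<otimes> (c \<otimes> y0) = c \<otimes> (g \<otimes> y0)" using comm cc g y0c by (simp add: m_assoc[symmetric])
      hence "\<psi> y = \<psi> y0" unfolding \<psi>_def c(2) using cc g y0c by (simp add: inv_mult_group m_assoc)
      moreover have "\<psi> y0 \<in> g <# M" using y0 unfolding H_def \<psi>_def by simp
      ultimately show "y \<in> A (\<psi> y0)" unfolding A_def H_def \<psi>_def using yc by simp
    qed
  qed
  have cardA: "card (A v) = card C" if v: "v \<in> \<psi> ` H" for v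
  proof -
    obtain y0 where y0: "y0 \<in> H" "v = \<psi> y0" using v by blast
    have y0c: "y0 \<in> carrier G" using y0 unfolding H_def by simp
    have "inj_on (\<lambda>c. c \<otimes> y0) C" unfolding C_def' using y0c by (intro inj_onI) auto
    thus ?thesis using fib[OF y0(1)] y0(2) by (simp add: card_image)
  qed
  have HU: "H = (\<Union>v\<in>\<psi> ` H. A v)" unfolding A_def by auto
  have "card H = (\<Sum>v\<in>\<psi> ` H. card (A v))"
    by (subst HU, rule card_UN_disjoint) (use finH in \<open>auto simp: A_def\<close>)
  also have "\<dots> = (\<Sum>v\<in>\<psi> ` H. card C)" using cardA by simp
  also have "\<dots> = card (\<psi> ` H) * card C" by simp
  finally show ?thesis unfolding H_def \<psi>_def C_def .
qed

lemma one_iff_two: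
  assumes fin: "finite (carrier G)" and M: "M \<lhd> G" and g: "g \<in> carrier G"
  shows "(\<forall>h \<in> g <# M. \<exists>x \<in> carrier G. inv x \<otimes> g \<otimes> x = h)
     \<longleftrightarrow> card (centralizer_of G g) = card (centralizer_of (G Mod M) (M #> g))"
proof -
  interpret normal M G by fact
  have Msub: "subgroup M G" using M normal_imp_subgroup by blast
  define H where "H = {y \<in> carrier G. inv y \<otimes> g \<otimes> y \<in> g <# M}"
  define \<psi> where "\<psi> = (\<lambda>y. inv y \<otimes> g \<otimes> y)"
  define C where "C = centralizer_of G g"
  define Cb where "Cb = centralizer_of (G Mod M) (M #> g)"
  have cQ: "card H = card M * card Cb" unfolding H_def Cb_def by (rule H_quot_count[OF fin M g])
  have cF: "card H = card (\<psi> ` H) * card C" unfolding H_def \<psi>_def C_def by (rule H_fiber_count[OF fin g])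
  have C0: "card C > 0"
  proof -
    have "\<one> \<in> C" unfolding C_def centralizer_of_def using g by simp
    moreover have "finite C" unfolding C_def centralizer_of_def using fin by simp
    ultimately show ?thesis using card_gt_0_iff by blast
  qed
  have M0: "card M > 0"
  proof -
    have "\<one> \<in> M" using Msub subgroup.one_closed by blast
    moreover have "finite M" using finite_subset[OF subset fin] .
    ultimately show ?thesis using card_gt_0_iff by blast
  qed
  have gM: "g <# M \<subseteq> carrier G" using l_coset_subset_G[OF subset g] .
  have fgM: "finite (g <# M)" using finite_subset[OF gM fin] .
  have cgM: "card (g <# M) = card M"
  proof -
    have "g <# M \<in> lcosets M" unfolding LCOSETS_def using g by blast
    thus ?thesis using l_card_cosets_equal[of "g <# M" M, OF _ subset fin] by simp
  qed
  have img: "\<psi> ` H \<subseteq> g <# M" unfolding H_def \<psi>_def by auto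
  have "(\<forall>h \<in> g <# M. \<exists>x \<in> carrier G. inv x \<otimes> g \<otimes> x = h) \<longleftrightarrow> g <# M \<subseteq> \<psi> ` H"
  proof
    assume A: "\<forall>h \<in> g <# M. \<exists>x \<in> carrier G. inv x \<otimes> g \<otimes> x = h"
    show "g <# M \<subseteq> \<psi> ` H"
    proof
      fix h assume h: "h \<in> g <# M"
      then obtain x where "x \<in> carrier G" "inv x \<otimes> g \<otimes> x = h" using A by blast
      thus "h \<in> \<psi> ` H" unfolding H_def \<psi>_def using h by force
    qed
  next
    assume "g <# M \<subseteq> \<psi> ` H"
    thus "\<forall>h \<in> g <# M. \<exists>x \<in> carrier G. inv x \<otimes> g \<otimes> x = h" unfolding H_def \<psi>_def by blast
  qed
  also have "\<dots> \<longleftrightarrow> card (\<psi> ` H) = card M"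
  proof
    assume "g <# M \<subseteq> \<psi> ` H"
    hence "\<psi> ` H = g <# M" using img by blast
    thus "card (\<psi> ` H) = card M" using cgM by simp
  next
    assume "card (\<psi> ` H) = card M"
    hence "\<psi> ` H = g <# M" using card_subset_eq[OF fgM img] cgM by simp
    thus "g <# M \<subseteq> \<psi> ` H" by simp
  qed
  also have "\<dots> \<longleftrightarrow> card C = card Cb"
  proof
    assume "card (\<psi> ` H) = card M"
    hence "card M * card C = card M * card Cb" using cQ cF by (simp add: mult.commute)
    thus "card C = card Cb" using M0 by simp
  next
    assume "card C = card Cb"
    hence "card (\<psi> ` H) * card C = card M * card C" using cQ cF by simp
    thus "card (\<psi> ` H) = card M" using C0 by simp
  qed
  finally show ?thesis unfolding C_def Cb_def .
qed

end


context group begin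

lemma one_imp_three:
  assumes fin: "finite (carrier G)" and M: "M \<lhd> G" and g: "g \<in> carrier G"
    and c1: "\<forall>h \<in> g <# M. \<exists>x \<in> carrier G. inv x \<otimes> g \<otimes> x = h"
    and chi: "\<chi> \<in> Irr_rel G M"
  shows "\<chi> g = 0"
proof -
  interpret normal M G by fact
  have chiI: "\<chi> \<in> Irr G" and nk: "\<not> M \<subseteq> char_ker G \<chi>" using chi unfolding Irr_rel_def by auto
  obtain n R where irr: "irreducible_rep G n R"
    and chi_def: "\<chi> = (\<lambda>g. if g \<in> carrier G then mat_trace (R g) else 0)"
    using chiI unfolding Irr_def mem_Collect_eq by blast
  have rep: "is_rep G n R" using irr unfolding irreducible_rep_def by auto
  have Rc: "\<And>g. g \<in> carrier G \<Longrightarrow> R g \<in> carrier_mat n n"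
    and Rm: "\<And>g h. g \<in> carrier G \<Longrightarrow> h \<in> carrier G \<Longrightarrow> R (g \<otimes> h) = R g * R h"
    using rep unfolding is_rep_def by auto
  have RS: "\<And>x. x \<in> M \<Longrightarrow> R x \<in> carrier_mat n n" using subset Rc by auto
  have "\<not> (\<forall>z\<in>M. R z = 1\<^sub>m n)"
  proof
    assume "\<forall>z\<in>M. R z = 1\<^sub>m n"
    hence "M \<subseteq> char_ker G (\<lambda>g. if g \<in> carrier G then mat_trace (R g) else 0)"
      using ker_char[OF irr M fin] by blast
    thus False using nk unfolding chi_def by blast
  qed
  hence P: "msum n M R = 0\<^sub>m n n" using normal_dichotomy[OF irr M] by blast
  have s1: "(\<Sum>z\<in>M. mat_trace (R (g \<otimes> z))) = (\<Sum>z\<in>M. mat_trace (R g))"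
  proof (rule sum.cong[OF refl])
    fix z assume z: "z \<in> M"
    hence "g \<otimes> z \<in> g <# M" unfolding l_coset_def by blast
    then obtain x where x: "x \<in> carrier G" "inv x \<otimes> g \<otimes> x = g \<otimes> z" using c1 by blast
    show "mat_trace (R (g \<otimes> z)) = mat_trace (R g)" using trace_conj[OF rep g x(1)] x(2) by simp
  qed
  have RSg: "\<And>x. x \<in> M \<Longrightarrow> R g * R x \<in> carrier_mat n n" using RS Rc[OF g] by (metis mult_carrier_mat)
  have "(\<Sum>z\<in>M. mat_trace (R (g \<otimes> z))) = (\<Sum>z\<in>M. mat_trace (R g * R z))"
    using Rm g subset by (intro sum.cong) auto
  also have "\<dots> = mat_trace (msum n M (\<lambda>z. R g * R z))"
    using trace_msum[of M "\<lambda>z. R g * R z" n, OF RSg] by simp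
  also have "\<dots> = mat_trace (R g * msum n M R)"
    using msum_mult_left[of "R g" n M R] Rc[OF g] RS by simp
  also have "\<dots> = 0" unfolding P using Rc[OF g] by (simp add: mat_trace_def)
  finally have "of_nat (card M) * mat_trace (R g) = 0" using s1 by simp
  moreover have "card M > 0"
  proof -
    have o: "\<one> \<in> M" using M normal_imp_subgroup subgroup.one_closed by blast
    have f: "finite M" using finite_subset[OF subset fin] .
    show ?thesis using o f card_gt_0_iff by blast
  qed
  ultimately show ?thesis unfolding chi_def using g by simp
qed

lemma three_imp_one:
  assumes fin: "finite (carrier G)" and M: "M \<lhd> G" and N: "N \<lhd> G" and MN: "M \<subseteq> N"
    and c3: "\<forall>g \<in> carrier G - N. \<forall>\<chi> \<in> Irr_rel G M. \<chi> g = 0"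
    and g: "g \<in> carrier G - N" and h: "h \<in> g <# M"
  shows "\<exists>x \<in> carrier G. inv x \<otimes> g \<otimes> x = h"
proof -
  have Msub: "subgroup M G" and Nsub: "subgroup N G" using M N normal_imp_subgroup by blast+
  have gc: "g \<in> carrier G" and gN: "g \<notin> N" using g by auto
  obtain z where z: "z \<in> M" "h = g \<otimes> z" using h unfolding l_coset_def by blast
  have zc: "z \<in> carrier G" using z(1) subgroup.subset[OF Msub] by blast
  have hc: "h \<in> carrier G" using z zc gc by simp
  have hN: "h \<notin> N"
  proof
    assume hN': "h \<in> N"
    have zN: "z \<in> N" using z(1) MN by blast
    have izN: "inv z \<in> N" by (rule subgroup.m_inv_closed[OF Nsub zN])
    have "h \<otimes> inv z \<in> N" by (rule subgroup.m_closed[OF Nsub hN' izN])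
    moreover have "h \<otimes> inv z = g" using z zc gc by (simp add: m_assoc)
    ultimately show False using gN by simp
  qed
  have "h \<in> conjcl G g"
  proof (rule irr_separates[OF fin gc hc])
    fix n R assume irr: "irreducible_rep G n R"
    define \<chi> where "\<chi> = (\<lambda>g. if g \<in> carrier G then mat_trace (R g) else 0)"
    have rep: "is_rep G n R" using irr unfolding irreducible_rep_def by auto
    have Rc: "\<And>g. g \<in> carrier G \<Longrightarrow> R g \<in> carrier_mat n n"
      and Rm: "\<And>g h. g \<in> carrier G \<Longrightarrow> h \<in> carrier G \<Longrightarrow> R (g \<otimes> h) = R g * R h"
      using rep unfolding is_rep_def by auto
    have chiI: "\<chi> \<in> Irr G" unfolding Irr_def mem_Collect_eq \<chi>_def by (intro exI conjI, rule irr, rule refl)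
    show "mat_trace (R g) = mat_trace (R h)"
    proof (cases "M \<subseteq> char_ker G \<chi>")
      case True
      have "\<forall>z\<in>M. R z = 1\<^sub>m n"
        by (rule iffD1[OF ker_char[OF irr M fin]]) (use True in \<open>simp only: \<chi>_def\<close>)
      hence "R z = 1\<^sub>m n" using z(1) by blast
      hence "R h = R g" using z(2) Rm[OF gc zc] right_mult_one_mat[OF Rc[OF gc]] by simp
      thus ?thesis by simp
    next
      case False
      hence chiR: "\<chi> \<in> Irr_rel G M" unfolding Irr_rel_def using chiI by blast
      have hG: "h \<in> carrier G - N" using hc hN by blast
      have "\<chi> g = 0" using bspec[OF bspec[OF c3 g] chiR] .
      moreover have "\<chi> h = 0" using bspec[OF bspec[OF c3 hG] chiR] .
      ultimately show ?thesis unfolding \<chi>_def using gc hc by simp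
    qed
  qed
  thus ?thesis unfolding conjcl_def by blast
qed

lemma one_iff_five:
  assumes g: "g \<in> carrier G" and Msub: "M \<subseteq> carrier G"
  shows "(\<forall>h \<in> g <# M. \<exists>x \<in> carrier G. inv x \<otimes> g \<otimes> x = h)
     \<longleftrightarrow> (\<forall>z \<in> M. \<exists>y \<in> carrier G. commutator_el G g y = z)"
proof
  assume A: "\<forall>h \<in> g <# M. \<exists>x \<in> carrier G. inv x \<otimes> g \<otimes> x = h"
  show "\<forall>z \<in> M. \<exists>y \<in> carrier G. commutator_el G g y = z"
  proof
    fix z assume z: "z \<in> M"
    hence zc: "z \<in> carrier G" using Msub by auto
    have "g \<otimes> z \<in> g <# M" using z unfolding l_coset_def by blast
    then obtain x where x: "x \<in> carrier G" "inv x \<otimes> g \<otimes> x = g \<otimes> z" using A by blast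
    have "commutator_el G g x = inv g \<otimes> (inv x \<otimes> g \<otimes> x)"
      unfolding commutator_el_def using g x by (simp add: m_assoc)
    also have "\<dots> = z" using x g zc by simp
    finally show "\<exists>y \<in> carrier G. commutator_el G g y = z" using x by blast
  qed
next
  assume B: "\<forall>z \<in> M. \<exists>y \<in> carrier G. commutator_el G g y = z"
  show "\<forall>h \<in> g <# M. \<exists>x \<in> carrier G. inv x \<otimes> g \<otimes> x = h"
  proof
    fix h assume "h \<in> g <# M"
    then obtain z where z: "z \<in> M" "h = g \<otimes> z" unfolding l_coset_def by blast
    then obtain y where y: "y \<in> carrier G" "commutator_el G g y = z" using B by blast
    have "h = g \<otimes> (inv g \<otimes> (inv y \<otimes> g \<otimes> y))"
      using y z unfolding commutator_el_def using g by (simp add: m_assoc)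
    also have "\<dots> = inv y \<otimes> g \<otimes> y" using g y by simp
    finally show "\<exists>x \<in> carrier G. inv x \<otimes> g \<otimes> x = h" using y by metis
  qed
qed

end

theorem mainTheorem6:
  fixes G :: "('a, 'b) monoid_scheme" and M N :: "'a set"
  assumes "group G" and "finite (carrier G)"
    and "M \<lhd> G" and "N \<lhd> G"
    and "M \<noteq> {\<one>\<^bsub>G\<^esub>}" and "M \<subset> N"
  shows "((\<forall>g \<in> carrier G - N. \<forall>h \<in> g <#\<^bsub>G\<^esub> M.
             \<exists>x \<in> carrier G. inv\<^bsub>G\<^esub> x \<otimes>\<^bsub>G\<^esub> g \<otimes>\<^bsub>G\<^esub> x = h)
       \<longleftrightarrow> (\<forall>g \<in> carrier G - N.
             card (centralizer_of G g) = card (centralizer_of (G Mod M) (M #>\<^bsub>G\<^esub> g))))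
     \<and> ((\<forall>g \<in> carrier G - N.
             card (centralizer_of G g) = card (centralizer_of (G Mod M) (M #>\<^bsub>G\<^esub> g)))
       \<longleftrightarrow> (\<forall>g \<in> carrier G - N. \<forall>\<chi> \<in> Irr_rel G M. \<chi> g = 0))
     \<and> ((\<forall>g \<in> carrier G - N. \<forall>\<chi> \<in> Irr_rel G M. \<chi> g = 0)
       \<longleftrightarrow> vanishing_off G M \<subseteq> N)
     \<and> (vanishing_off G M \<subseteq> N
       \<longleftrightarrow> (\<forall>g \<in> carrier G - N. \<forall>z \<in> M. \<exists>y \<in> carrier G. commutator_el G g y = z))"
proof -
  interpret group G by fact
  note fin = assms(2) and M = assms(3) and N = assms(4)
  have MN: "M \<subseteq> N" using assms(6) by blast
  have Msub: "M \<subseteq> carrier G" using M normal_imp_subgroup subgroup.subset by blast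
  have Nsub: "subgroup N G" using N normal_imp_subgroup by blast
  define P1 where "P1 = (\<forall>g \<in> carrier G - N. \<forall>h \<in> g <#\<^bsub>G\<^esub> M. \<exists>x \<in> carrier G. inv\<^bsub>G\<^esub> x \<otimes>\<^bsub>G\<^esub> g \<otimes>\<^bsub>G\<^esub> x = h)"
  define P2 where "P2 = (\<forall>g \<in> carrier G - N. card (centralizer_of G g) = card (centralizer_of (G Mod M) (M #>\<^bsub>G\<^esub> g)))"
  define P3 where "P3 = (\<forall>g \<in> carrier G - N. \<forall>\<chi> \<in> Irr_rel G M. \<chi> g = 0)"
  define P4 where "P4 = (vanishing_off G M \<subseteq> N)"
  define P5 where "P5 = (\<forall>g \<in> carrier G - N. \<forall>z \<in> M. \<exists>y \<in> carrier G. commutator_el G g y = z)"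
  have 12: "P1 \<longleftrightarrow> P2" unfolding P1_def P2_def using one_iff_two[OF fin M] by blast
  have 13: "P1 \<longleftrightarrow> P3"
  proof
    assume P1 thus P3 unfolding P1_def P3_def using one_imp_three[OF fin M] by blast
  next
    assume P3 thus P1 unfolding P1_def P3_def using three_imp_one[OF fin M N MN] by blast
  qed
  have 34: "P3 \<longleftrightarrow> P4"
  proof
    assume p3: P3
    have "{g \<in> carrier G. \<exists>\<chi> \<in> Irr_rel G M. \<chi> g \<noteq> 0} \<subseteq> N" using p3 unfolding P3_def by blast
    thus P4 unfolding P4_def vanishing_off_def using generate_subgroup_incl[OF _ Nsub] by blast
  next
    assume p4: P4
    show P3 unfolding P3_def
    proof (intro ballI)
      fix g \<chi> assume g: "g \<in> carrier G - N" and chi: "\<chi> \<in> Irr_rel G M"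
      show "\<chi> g = 0"
      proof (rule ccontr)
        assume "\<chi> g \<noteq> 0"
        hence "g \<in> {g \<in> carrier G. \<exists>\<chi> \<in> Irr_rel G M. \<chi> g \<noteq> 0}" using g chi by blast
        hence "g \<in> vanishing_off G M" unfolding vanishing_off_def by (rule generate.incl)
        thus False using p4 g unfolding P4_def by blast
      qed
    qed
  qed
  have 15: "P1 \<longleftrightarrow> P5" unfolding P1_def P5_def using one_iff_five[OF _ Msub] by blast
  have "(P1 \<longleftrightarrow> P2) \<and> (P2 \<longleftrightarrow> P3) \<and> (P3 \<longleftrightarrow> P4) \<and> (P4 \<longleftrightarrow> P5)" using 12 13 34 15 by blast
  thus ?thesis unfolding P1_def P2_def P3_def P4_def P5_def .
qed

end
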